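(* Let $0<s<1$ and $\mathcal{D}_{<s}=\mathcal{D}_{\leq s}\setminus\mathcal{D}_s=\{x\in2^\omega:dim(x)<s\}$. If $f$ is a gauge function such that $x^{-1}f(x)$ is monotonically decreasing, then $H^f(\mathcal{D}_{<s})=0$ if and only if $f(x)\leq^* x^r$ for every $r\in(0,s)$. Moreover, $\mathcal{D}_{<s}$ has Hausdorff dimension $s$ and $H^s(\mathcal{D}_{<s})=0$, where $H^s=H^{f}$ for $f(x)=x^s$.
   Context: A gauge function is a continuous non-decreasing $f:\mathbb{R}^+\to\mathbb{R}^+$ with $\lim_{x\to0^+}f(x)=0$. For $A\subseteq2^\omega$, $H^f(A)=\lim_{n\to\infty}\inf\{\sum_i f(2^{-|\sigma_i|}):\bigcup_i[\sigma_i]\supseteq A,\ \forall i\ |\sigma_i|\geq n\}$, where $[\sigma]$ is the set of infinite binary sequences extending the finite string $\sigma$. $f(x)\leq^* g(x)$ means there is $\delta>0$ with $f(x)\leq g(x)$ for all $x\in(0,\delta)$. $K$ is prefix-free Kolmogorov complexity, $dim(x)=\liminf_{n\to\infty}K(x\upharpoonright n)/n$ for $x\in2^\omega$, $\mathcal{D}_s=\{x:dim(x)=s\}$, $\mathcal{D}_{\le s}=\{x:dim(x)\le s\}$. *)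

theory Defs
  imports Complex_Main "HOL-Library.Extended_Real" "HOL-Analysis.Analysis"
begin

type_synonym seq = "nat \<Rightarrow> bool"

definition cyl :: "bool list \<Rightarrow> seq set" where
  "cyl \<sigma> = {x. \<forall>i<length \<sigma>. x i = \<sigma> ! i}"

definition restr :: "seq \<Rightarrow> nat \<Rightarrow> bool list" where
  "restr x n = map x [0..<n]"

definition gauge :: "(real \<Rightarrow> real) \<Rightarrow> bool" where
  "gauge f \<longleftrightarrow> continuous_on {0<..} f \<and> mono_on {0<..} f \<and>
     (\<forall>x>0. f x > 0) \<and> (f \<longlongrightarrow> 0) (at_right 0)"

definition hausdorff :: "(real \<Rightarrow> real) \<Rightarrow> seq set \<Rightarrow> ennreal" where
  "hausdorff f A = (SUP n. INF S \<in> {S. A \<subseteq> (\<Union>\<sigma>\<in>S. cyl \<sigma>) \<and> (\<forall>\<sigma>\<in>S. length \<sigma> \<ge> n)}.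
      (\<Sum>\<^sub>\<infinity>\<sigma>\<in>S. ennreal (f (2 powr (- real (length \<sigma>))))))"

definition le_star :: "(real \<Rightarrow> real) \<Rightarrow> (real \<Rightarrow> real) \<Rightarrow> bool" where
  "le_star f g \<longleftrightarrow> (\<exists>\<delta>>0. \<forall>x. 0 < x \<and> x < \<delta> \<longrightarrow> f x \<le> g x)"

definition hdim :: "seq set \<Rightarrow> real" where
  "hdim A = Inf {t. t \<ge> 0 \<and> hausdorff (\<lambda>x. x powr t) A = 0}"

datatype recf = Z | S | Proj nat | Comp recf "recf list" | Prec recf recf | Mu recf

inductive eval :: "recf \<Rightarrow> nat list \<Rightarrow> nat \<Rightarrow> bool" where
  eval_Z: "eval Z xs 0"
| eval_S: "eval S (x # xs) (Suc x)"
| eval_Proj: "i < length xs \<Longrightarrow> eval (Proj i) xs (xs ! i)"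
| eval_Comp: "length ys = length gs \<Longrightarrow> (\<forall>i<length gs. eval (gs ! i) xs (ys ! i)) \<Longrightarrow>
     eval f ys z \<Longrightarrow> eval (Comp f gs) xs z"
| eval_Prec0: "eval f xs z \<Longrightarrow> eval (Prec f g) (0 # xs) z"
| eval_PrecS: "eval (Prec f g) (n # xs) r \<Longrightarrow> eval g (r # n # xs) z \<Longrightarrow>
     eval (Prec f g) (Suc n # xs) z"
| eval_Mu: "eval f (n # xs) 0 \<Longrightarrow> (\<forall>m<n. \<exists>y. y \<noteq> 0 \<and> eval f (m # xs) y) \<Longrightarrow>
     eval (Mu f) xs n"

text \<open>Bijective binary coding of binary strings by natural numbers.\<close>
primrec enc :: "bool list \<Rightarrow> nat" where
  "enc [] = 0"
| "enc (b # bs) = (if b then 2 else 1) + 2 * enc bs"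

definition runs :: "recf \<Rightarrow> bool list \<Rightarrow> bool list \<Rightarrow> bool" where
  "runs M p q \<longleftrightarrow> eval M [enc p] (enc q)"

definition prefix_free_machine :: "recf \<Rightarrow> bool" where
  "prefix_free_machine M \<longleftrightarrow>
     (\<forall>p p' q q'. runs M p q \<and> runs M p' q' \<and> (\<exists>r. p' = p @ r) \<longrightarrow> p = p')"

definition KM :: "recf \<Rightarrow> bool list \<Rightarrow> enat" where
  "KM M \<sigma> = (INF p \<in> {p. runs M p \<sigma>}. enat (length p))"

definition optimal_pf :: "recf \<Rightarrow> bool" where
  "optimal_pf U \<longleftrightarrow> prefix_free_machine U \<and>
     (\<forall>M. prefix_free_machine M \<longrightarrow> (\<exists>c::nat. \<forall>\<sigma>. KM U \<sigma> \<le> KM M \<sigma> + enat c))"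

text \<open>Prefix-free Kolmogorov complexity relative to U (finite for optimal U).\<close>
definition K :: "recf \<Rightarrow> bool list \<Rightarrow> nat" where
  "K U \<sigma> = the_enat (KM U \<sigma>)"

definition dim :: "recf \<Rightarrow> seq \<Rightarrow> ereal" where
  "dim U x = liminf (\<lambda>n. ereal (real (K U (restr x n)) / real n))"

definition D_lt :: "recf \<Rightarrow> real \<Rightarrow> seq set" where
  "D_lt U s = {x. dim U x < ereal s}"

end

theory Submission
  imports Defs
begin

inductive_cases evZ: "eval Z xs z"
inductive_cases evS: "eval S xs z"
inductive_cases evP: "eval (Proj i) xs z"
inductive_cases evC: "eval (Comp f gs) xs z"
inductive_cases evR: "eval (Prec f g) xs z"
inductive_cases evM: "eval (Mu f) xs z"

lemma eval_det: "eval f xs z \<Longrightarrow> eval f xs z' \<Longrightarrow> z = z'"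
proof (induction f xs z arbitrary: z' rule: eval.induct)
  case (eval_Z xs) then show ?case by (auto elim: evZ)
next
  case (eval_S x xs) then show ?case by (auto elim: evS)
next
  case (eval_Proj i xs) then show ?case by (auto elim: evP)
next
  case (eval_Comp ys gs xs f z)
  from eval_Comp.prems obtain ys' where y': "length ys' = length gs"
    "\<forall>i<length gs. eval (gs ! i) xs (ys' ! i)" "eval f ys' z'"
    by (auto elim: evC)
  have "ys = ys'"
  proof (rule nth_equalityI)
    show "length ys = length ys'" using eval_Comp.hyps(1) y'(1) by simp
    fix i assume "i < length ys"
    then have "i < length gs" using eval_Comp.hyps(1) by simp
    then show "ys ! i = ys' ! i" using eval_Comp.IH(1) y'(2) by blast
  qed
  then show ?case using eval_Comp.IH(2) y'(3) by simp
next
  case (eval_Prec0 f xs z g)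
  from eval_Prec0.prems show ?case by (rule evR) (use eval_Prec0.IH in auto)
next
  case (eval_PrecS f g n xs r z)
  from eval_PrecS.prems show ?case
    by (rule evR) (use eval_PrecS.IH in blast)+
next
  case (eval_Mu f n xs)
  from eval_Mu.prems have n': "eval f (z' # xs) 0" "\<forall>m<z'. \<exists>y. y \<noteq> 0 \<and> eval f (m # xs) y"
    by (rule evM, blast)+
  show ?case
  proof (rule linorder_cases[of n z'])
    assume "n < z'" then show ?thesis using n' eval_Mu.IH(1) by blast
  next
    assume "n = z'" then show ?thesis .
  next
    assume "z' < n" then show ?thesis using n' eval_Mu.IH(2) by blast
  qed
qed

definition total :: "recf \<Rightarrow> nat \<Rightarrow> (nat list \<Rightarrow> nat) \<Rightarrow> bool" where
  "total F n g \<longleftrightarrow> (\<forall>xs. length xs = n \<longrightarrow> eval F xs (g xs))"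

lemma total_eval_iff: "total F n g \<Longrightarrow> length xs = n \<Longrightarrow> eval F xs z \<longleftrightarrow> z = g xs"
  unfolding total_def using eval_det by blast

lemma total_cong: "total F n g \<Longrightarrow> (\<And>xs. length xs = n \<Longrightarrow> g xs = g' xs) \<Longrightarrow> total F n g'"
  unfolding total_def by metis

lemma total_Z: "total Z n (\<lambda>_. 0)"
  unfolding total_def by (auto intro: eval_Z)

lemma total_S: "total S 1 (\<lambda>xs. Suc (xs ! 0))"
  unfolding total_def by (auto simp: length_Suc_conv intro: eval_S)

lemma total_Proj: "i < n \<Longrightarrow> total (Proj i) n (\<lambda>xs. xs ! i)"
  unfolding total_def by (auto intro: eval_Proj)

lemma total_Comp1: "total f 1 g \<Longrightarrow> total G n h \<Longrightarrow> total (Comp f [G]) n (\<lambda>xs. g [h xs])"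
  unfolding total_def
  by (auto intro!: eval_Comp[where ys="[_]"] simp: less_Suc_eq)

lemma total_Comp2: "total f (Suc (Suc 0)) g \<Longrightarrow> total G1 n h1 \<Longrightarrow> total G2 n h2 \<Longrightarrow>
   total (Comp f [G1, G2]) n (\<lambda>xs. g [h1 xs, h2 xs])"
  unfolding total_def
  apply (intro allI impI)
  apply (rule eval_Comp[where ys="[_, _]"])
  by (auto simp: less_Suc_eq nth_Cons')

lemma total_Prec:
  assumes f: "total f n g" and h: "total h (Suc (Suc n)) k"
    and F0: "\<And>ys. length ys = n \<Longrightarrow> F (0 # ys) = g ys"
    and FS: "\<And>i ys. length ys = n \<Longrightarrow> F (Suc i # ys) = k (F (i # ys) # i # ys)"
  shows "total (Prec f h) (Suc n) F"
  unfolding total_def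
proof (intro allI impI)
  fix xs :: "nat list" assume "length xs = Suc n"
  then obtain i ys where xs: "xs = i # ys" "length ys = n" by (cases xs) auto
  have "eval (Prec f h) (i # ys) (F (i # ys))"
  proof (induction i)
    case 0 then show ?case using f xs(2) F0 by (simp add: total_def eval_Prec0)
  next
    case (Suc i)
    have "eval h (F (i # ys) # i # ys) (k (F (i # ys) # i # ys))"
      using h xs(2) by (simp add: total_def)
    then show ?case using Suc FS xs(2) by (simp add: eval_PrecS)
  qed
  then show "eval (Prec f h) xs (F xs)" using xs by simp
qed

lemma eval_Comp1_iff: "eval (Comp f [G]) xs z \<longleftrightarrow> (\<exists>y. eval G xs y \<and> eval f [y] z)"
proof
  assume "eval (Comp f [G]) xs z"
  then show "\<exists>y. eval G xs y \<and> eval f [y] z"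
    by (rule evC) (auto simp: length_Suc_conv)
next
  assume "\<exists>y. eval G xs y \<and> eval f [y] z"
  then show "eval (Comp f [G]) xs z" by (auto intro!: eval_Comp[where ys="[_]"])
qed

lemma eval_Comp2_iff: "eval (Comp f [G1, G2]) xs z \<longleftrightarrow>
   (\<exists>y1 y2. eval G1 xs y1 \<and> eval G2 xs y2 \<and> eval f [y1, y2] z)"
proof
  assume "eval (Comp f [G1, G2]) xs z"
  then show "\<exists>y1 y2. eval G1 xs y1 \<and> eval G2 xs y2 \<and> eval f [y1, y2] z"
  proof (rule evC)
    fix ys assume "length ys = length [G1, G2]" "\<forall>i<length [G1, G2]. eval ([G1, G2] ! i) xs (ys ! i)"
      "eval f ys z"
    then show ?thesis
      by (auto simp: length_Suc_conv) (metis nth_Cons_0 nth_Cons_Suc zero_less_Suc One_nat_def lessI)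
  qed
next
  assume "\<exists>y1 y2. eval G1 xs y1 \<and> eval G2 xs y2 \<and> eval f [y1, y2] z"
  then show "eval (Comp f [G1, G2]) xs z"
    by (auto intro!: eval_Comp[where ys="[_, _]"] simp: less_Suc_eq nth_Cons')
qed

lemma eval_Mu_iff: "total F (Suc n) g \<Longrightarrow> length xs = n \<Longrightarrow>
   eval (Mu F) xs z \<longleftrightarrow> g (z # xs) = 0 \<and> (\<forall>m<z. g (m # xs) \<noteq> 0)"
proof
  assume t: "total F (Suc n) g" and l: "length xs = n"
  {
    assume "eval (Mu F) xs z"
    then show "g (z # xs) = 0 \<and> (\<forall>m<z. g (m # xs) \<noteq> 0)"
      by (rule evM) (use t l total_eval_iff in fastforce)
  }
  {
    assume "g (z # xs) = 0 \<and> (\<forall>m<z. g (m # xs) \<noteq> 0)"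
    moreover have "\<And>m. eval F (m # xs) (g (m # xs))" using t l by (simp add: total_def)
    ultimately show "eval (Mu F) xs z"
      by (intro eval_Mu) (metis, blast)
  }
qed

lemmas total_intros = total_Z total_S total_Proj total_Comp1 total_Comp2

definition "ADD = Prec (Proj 0) (Comp S [Proj 0])"
definition "MUL = Prec Z (Comp ADD [Proj 0, Proj 2])"
definition "PRED = Prec Z (Proj 1)"
definition "SUBR = Prec (Proj 0) (Comp PRED [Proj 0])"
definition "MINUS = Comp SUBR [Proj 1, Proj 0]"
definition "POW2 = Prec (Comp S [Z]) (Comp ADD [Proj 0, Proj 0])"
definition "PAR = Prec Z (Comp SUBR [Proj 0, Comp S [Z]])"
definition "HALF = Prec Z (Comp ADD [Proj 0, Comp PAR [Proj 1]])"
definition "TL = Comp HALF [Comp PRED [Proj 0]]"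
definition "DROPF = Prec (Proj 0) (Comp TL [Proj 0])"

definition tl2 :: "nat \<Rightarrow> nat" where "tl2 x = (x - 1) div 2"
definition dr :: "nat \<Rightarrow> nat \<Rightarrow> nat" where "dr k = tl2 ^^ k"

lemma len1: "length xs = Suc 0 \<longleftrightarrow> (\<exists>a. xs = [a])" by (cases xs) auto
lemma len2: "length xs = 2 \<longleftrightarrow> (\<exists>a b. xs = [a, b])"
  by (cases xs; cases "tl xs") (auto simp: numeral_2_eq_2)
lemma len3: "length xs = 3 \<longleftrightarrow> (\<exists>a b c. xs = [a, b, c])"
  by (cases xs; cases "tl xs"; cases "tl (tl xs)") (auto simp: numeral_3_eq_3)

lemma t_ADD: "total ADD (Suc (Suc 0)) (\<lambda>xs. xs ! 0 + xs ! 1)"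
  unfolding ADD_def
  by (rule total_Prec[OF total_Proj total_Comp1[OF total_S total_Proj]]) (auto simp: len1)

lemma t_MUL: "total MUL (Suc (Suc 0)) (\<lambda>xs. xs ! 0 * xs ! 1)"
  unfolding MUL_def
  apply (rule total_Prec[OF total_Z total_Comp2[OF t_ADD total_Proj total_Proj]])
  by (auto simp: len1)

lemma t_PRED: "total PRED 1 (\<lambda>xs. xs ! 0 - 1)"
  unfolding PRED_def One_nat_def
  by (rule total_Prec[OF total_Z total_Proj]) auto

lemma t_SUBR: "total SUBR (Suc (Suc 0)) (\<lambda>xs. xs ! 1 - xs ! 0)"
  unfolding SUBR_def
  by (rule total_Prec[OF total_Proj total_Comp1[OF t_PRED total_Proj]]) (auto simp: len1)

lemma t_MINUS: "total MINUS (Suc (Suc 0)) (\<lambda>xs. xs ! 0 - xs ! 1)"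
  unfolding MINUS_def
  by (rule total_cong[OF total_Comp2[OF t_SUBR total_Proj total_Proj]]) (auto simp: len2[unfolded numeral_2_eq_2])

lemma t_POW2: "total POW2 1 (\<lambda>xs. 2 ^ (xs ! 0))"
  unfolding POW2_def One_nat_def
  apply (rule total_Prec[OF total_cong[OF total_Comp1[OF total_S total_Z]]
        total_Comp2[OF t_ADD total_Proj total_Proj]])
  by auto

lemma t_PAR: "total PAR 1 (\<lambda>xs. xs ! 0 mod 2)"
  unfolding PAR_def One_nat_def
  apply (rule total_Prec[OF total_Z total_Comp2[OF t_SUBR total_Proj total_Comp1[OF total_S total_Z]]])
  by (auto simp: mod_Suc)

lemma half_Suc: "Suc i div 2 = i div 2 + i mod 2" by presburger

lemma t_HALF: "total HALF 1 (\<lambda>xs. xs ! 0 div 2)"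
  unfolding HALF_def One_nat_def
  apply (rule total_Prec[OF total_Z total_Comp2[OF t_ADD total_Proj total_Comp1[OF t_PAR total_Proj]]])
  by (auto simp: half_Suc)

lemma t_TL: "total TL 1 (\<lambda>xs. tl2 (xs ! 0))"
  unfolding TL_def tl2_def
  by (rule total_cong[OF total_Comp1[OF t_HALF total_Comp1[OF t_PRED total_Proj]]]) auto

lemma t_DROPF: "total DROPF (Suc (Suc 0)) (\<lambda>xs. dr (xs ! 0) (xs ! 1))"
  unfolding DROPF_def
  by (rule total_Prec[OF total_Proj total_Comp1[OF t_TL total_Proj]]) (auto simp: len1 dr_def)

definition "Cc = Proj 0"
definition "Ee = Proj 1"
definition "C1 = Comp S [Cc]"
definition "C2 = Comp S [Comp ADD [Cc, Cc]]"
definition "C3 = Comp S [Comp ADD [Cc, Comp ADD [Cc, Cc]]]"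
definition "D1 = Comp DROPF [C1, Ee]"
definition "D2 = Comp DROPF [C2, Ee]"
definition "D3 = Comp DROPF [C3, Ee]"
definition "PP = Comp POW2 [Cc]"
definition "RU1 = Comp MINUS [D1, Comp MUL [PP, D2]]"
definition "RU2 = Comp MINUS [D2, Comp MUL [PP, D3]]"
definition "RL = Comp MINUS [Comp S [RU1], PP]"
definition "RM = Comp MINUS [Comp S [RU2], PP]"
definition "RK = Comp ADD [Comp ADD [Cc, Cc], RL]"
definition "CHK = Comp ADD [Comp MINUS [Comp POW2 [RK], Comp S [D1]],
                           Comp MINUS [Comp S [Comp S [D1]], Comp POW2 [Comp S [RK]]]]"
definition "PL = Comp POW2 [RL]"
definition "OUT = Comp ADD [D3, Comp MINUS [Comp MUL [PL, Comp POW2 [RM]], PL]]"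
definition "GATE = Mu (Comp CHK [Proj 1, Proj 2])"
definition "BODY = Comp ADD [OUT, GATE]"
definition "CSEARCH = Mu (Comp SUBR [Comp PAR [DROPF], Comp S [Z]])"
definition "MACH = Comp BODY [CSEARCH, Proj 0]"

definition "mU1 c e = dr (Suc c) e - 2^c * dr (Suc (c+c)) e"
definition "mU2 c e = dr (Suc (c+c)) e - 2^c * dr (Suc (c+(c+c))) e"
definition "mL c e = Suc (mU1 c e) - 2^c"
definition "mM c e = Suc (mU2 c e) - 2^c"
definition "mCHK c e = (2^(c+c+mL c e) - Suc (dr (Suc c) e)) + (Suc (Suc (dr (Suc c) e)) - 2^(Suc (c+c+mL c e)))"
definition "mOUT c e = dr (Suc (c+(c+c))) e + (2^(mL c e) * 2^(mM c e) - 2^(mL c e))"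

lemmas tl = total_intros t_ADD t_MUL t_MINUS t_POW2 t_PAR t_SUBR t_DROPF

lemma t_CHK: "total CHK (Suc (Suc 0)) (\<lambda>xs. mCHK (xs ! 0) (xs ! 1))"
  unfolding CHK_def RK_def RL_def RU1_def PP_def D1_def D2_def C1_def C2_def Cc_def Ee_def
  apply (rule total_cong)
   apply (rule tl | simp)+
  by (simp add: mCHK_def mL_def mU1_def)

lemma t_OUT: "total OUT (Suc (Suc 0)) (\<lambda>xs. mOUT (xs ! 0) (xs ! 1))"
  unfolding OUT_def PL_def RM_def RL_def RU1_def RU2_def PP_def D1_def D2_def D3_def C1_def C2_def C3_def Cc_def Ee_def
  apply (rule total_cong)
   apply (rule tl | simp)+
  by (simp add: mOUT_def mL_def mM_def mU1_def mU2_def)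

lemma t_CS: "total (Comp SUBR [Comp PAR [DROPF], Comp S [Z]]) (Suc (Suc 0)) (\<lambda>xs. 1 - dr (xs ! 0) (xs ! 1) mod 2)"
  apply (rule total_cong)
   apply (rule tl | simp)+
  done

lemma ev_GATE: "eval GATE [c, e] g \<longleftrightarrow> g = 0 \<and> mCHK c e = 0"
proof -
  have t: "total (Comp CHK [Proj 1, Proj 2]) (Suc (Suc (Suc 0))) (\<lambda>xs. mCHK (xs ! 1) (xs ! 2))"
    by (rule total_cong, (rule tl t_CHK | simp)+)
  show ?thesis unfolding GATE_def using eval_Mu_iff[OF t, of "[c, e]" g] by auto
qed

lemma ev_CSEARCH: "eval CSEARCH [e] c \<longleftrightarrow> odd (dr c e) \<and> (\<forall>m<c. even (dr m e))"
proof -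
  have h: "(1 - x mod 2 = 0) = odd x" "(1 - x mod 2 \<noteq> 0) = even x" "(Suc 0 \<le> x mod 2) = odd x" for x :: nat by presburger+
  show ?thesis unfolding CSEARCH_def using eval_Mu_iff[OF t_CS, of "[e]" c] by (simp add: h)
qed

lemma ev_MACH: "eval MACH [e] z \<longleftrightarrow>
   (\<exists>c. odd (dr c e) \<and> (\<forall>m<c. even (dr m e)) \<and> mCHK c e = 0 \<and> z = mOUT c e)"
proof -
  have p0: "eval (Proj 0) [e] y \<longleftrightarrow> y = e" for y
    using total_eval_iff[OF total_Proj[of 0 "Suc 0"], of "[e]"] by simp
  have hO: "eval OUT [c, e] y \<longleftrightarrow> y = mOUT c e" for c y
    using total_eval_iff[OF t_OUT, of "[c, e]"] by simp
  have a: "eval ADD [x, y] z \<longleftrightarrow> z = x + y" for x y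
    using total_eval_iff[OF t_ADD, of "[x, y]"] by simp
  show ?thesis
    unfolding MACH_def BODY_def eval_Comp2_iff p0 a ev_GATE ev_CSEARCH by (auto simp: hO)
qed

lemma enc_append: "enc (u @ v) = enc u + 2 ^ length u * enc v"
  by (induction u) (auto simp: algebra_simps)

lemma tl2_enc: "tl2 (enc p) = enc (tl p)"
  by (cases p) (auto simp: tl2_def)

lemma dr_enc: "dr k (enc p) = enc (drop k p)"
  by (induction k) (auto simp: dr_def tl2_enc drop_Suc tl_drop)

lemma odd_enc: "odd (enc p) \<longleftrightarrow> p \<noteq> [] \<and> \<not> hd p"
  by (cases p) auto

lemma enc_bounds: "2 ^ length u \<le> enc u + 1 \<and> enc u + 1 < 2 ^ Suc (length u)"
  by (induction u) auto

lemma enc_inj: "enc u = enc v \<Longrightarrow> u = v"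
proof (induction u arbitrary: v)
  case Nil then show ?case by (cases v) (auto split: if_splits)
next
  case (Cons a u)
  note pr = Cons.prems and ih = Cons.IH
  show ?case
  proof (cases v)
    case Nil then show ?thesis using pr by (simp split: if_splits)
  next
    case hv: (Cons b v')
    have "a = b \<and> enc u = enc v'" using pr unfolding hv by (cases a; cases b; simp; presburger)
    then show ?thesis using ih hv by simp
  qed
qed

lemma enc_repF: "enc (replicate m False) + 1 = 2 ^ m"
  by (induction m) auto

lemma len_from_enc:
  assumes "2 ^ k \<le> enc u + 1" "enc u + 1 < 2 ^ Suc k" shows "k = length u"
proof -
  have b: "2 ^ length u \<le> enc u + 1" "enc u + 1 < 2 ^ Suc (length u)" using enc_bounds by auto
  have "(2::nat) ^ k < 2 ^ Suc (length u)" using assms(1) b(2) by linarith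
  then have "k < Suc (length u)" using power_strict_increasing_iff[of "2::nat" k "Suc (length u)"] by (simp del: power_Suc)
  moreover have "(2::nat) ^ length u < 2 ^ Suc k" using assms(2) b(1) by linarith
  then have "length u < Suc k" using power_strict_increasing_iff[of "2::nat" "length u" "Suc k"] by (simp del: power_Suc)
  ultimately show ?thesis by simp
qed

definition prog :: "nat \<Rightarrow> bool list \<Rightarrow> bool list \<Rightarrow> bool list \<Rightarrow> bool list" where
  "prog c u1 u2 w = replicate c True @ False # u1 @ u2 @ w"

definition valid :: "nat \<Rightarrow> bool list \<Rightarrow> bool list \<Rightarrow> bool list \<Rightarrow> bool" where
  "valid c u1 u2 w \<longleftrightarrow> length u1 = c \<and> length u2 = c \<and> length w + 2 ^ c = Suc (enc u1)"

definition outp :: "nat \<Rightarrow> bool list \<Rightarrow> bool list \<Rightarrow> bool list" where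
  "outp c u2 w = w @ replicate (Suc (enc u2) - 2 ^ c) False"

lemma drop_prog: "m \<le> c \<Longrightarrow> drop m (prog c u1 u2 w) = replicate (c - m) True @ False # u1 @ u2 @ w"
  by (simp add: prog_def)

lemma mU_parts:
  assumes "length u1 = c" "length u2 = c"
  shows "mU1 c (enc (prog c u1 u2 w)) = enc u1" "mU2 c (enc (prog c u1 u2 w)) = enc u2"
    "dr (Suc c) (enc (prog c u1 u2 w)) = enc (u1 @ u2 @ w)"
    "dr (Suc (c+(c+c))) (enc (prog c u1 u2 w)) = enc w"
proof -
  have d1: "drop (Suc c) (prog c u1 u2 w) = u1 @ u2 @ w" by (simp add: prog_def)
  have d2: "drop (Suc (c+c)) (prog c u1 u2 w) = u2 @ w"
    using assms by (simp add: prog_def)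
  have d3: "drop (Suc (c+(c+c))) (prog c u1 u2 w) = w"
    using assms by (simp add: prog_def)
  show "mU1 c (enc (prog c u1 u2 w)) = enc u1"
    unfolding mU1_def dr_enc d1 d2 enc_append[of u1 "u2 @ w"] assms(1) by simp
  show "mU2 c (enc (prog c u1 u2 w)) = enc u2"
    unfolding mU2_def dr_enc d2 d3 enc_append[of u2 w] assms(2) by simp
  show "dr (Suc c) (enc (prog c u1 u2 w)) = enc (u1 @ u2 @ w)" unfolding dr_enc d1 ..
  show "dr (Suc (c+(c+c))) (enc (prog c u1 u2 w)) = enc w" unfolding dr_enc d3 ..
qed

lemma runs_prog:
  assumes v: "valid c u1 u2 w"
  shows "runs MACH (prog c u1 u2 w) (outp c u2 w)"
proof -
  let ?p = "prog c u1 u2 w" let ?e = "enc ?p"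
  have l: "length u1 = c" "length u2 = c" "length w + 2 ^ c = Suc (enc u1)" using v by (auto simp: valid_def)
  have odd: "odd (dr c ?e)" by (simp add: dr_enc drop_prog odd_enc)
  have ev: "\<forall>m<c. even (dr m ?e)"
  proof (intro allI impI)
    fix m assume "m < c"
    then have cm: "c - m = Suc (c - Suc m)" by simp
    have "drop m ?p = True # replicate (c - Suc m) True @ False # u1 @ u2 @ w"
      using \<open>m < c\<close> by (simp add: drop_prog cm)
    then show "even (dr m ?e)" by (simp add: dr_enc)
  qed
  note U = mU_parts[OF l(1,2), of w]
  have L: "mL c ?e = length w" using l(3) by (simp add: mL_def U)
  have len: "length (u1 @ u2 @ w) = c + c + mL c ?e" using l L by simp
  have b: "2 ^ (c+c+mL c ?e) \<le> enc (u1 @ u2 @ w) + 1 \<and> enc (u1 @ u2 @ w) + 1 < 2 ^ Suc (c+c+mL c ?e)"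
    using enc_bounds[of "u1 @ u2 @ w"] unfolding len .
  have chk: "mCHK c ?e = 0"
    unfolding mCHK_def U(3) using b by linarith
  have out: "mOUT c ?e = enc (outp c u2 w)"
  proof -
    let ?m = "Suc (enc u2) - 2 ^ c"
    have "enc (outp c u2 w) = enc w + 2 ^ length w * enc (replicate ?m False)"
      by (simp add: outp_def enc_append)
    also have "enc (replicate ?m False) = 2 ^ ?m - 1" using enc_repF[of ?m] by simp
    also have "enc w + 2 ^ length w * (2 ^ ?m - 1) = enc w + (2 ^ length w * 2 ^ ?m - 2 ^ length w)"
      by (simp add: right_diff_distrib')
    finally show ?thesis by (simp add: mOUT_def U L mM_def)
  qed
  show ?thesis unfolding runs_def ev_MACH
    by (intro exI[of _ c] conjI; (fact odd | fact ev | fact chk | simp only: out))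
qed

lemma runs_MACH_form:
  assumes r: "runs MACH p q"
  shows "\<exists>c u1 u2 w. valid c u1 u2 w \<and> p = prog c u1 u2 w \<and> q = outp c u2 w"
proof -
  let ?e = "enc p"
  from r obtain c where c: "odd (dr c ?e)" "\<forall>m<c. even (dr m ?e)" "mCHK c ?e = 0"
    unfolding runs_def ev_MACH by blast
  have dc: "drop c p \<noteq> []" "\<not> hd (drop c p)" using c(1) by (auto simp: dr_enc odd_enc)
  then have lc: "c < length p" by simp
  have tk: "take c p = replicate c True"
  proof (rule nth_equalityI)
    show "length (take c p) = length (replicate c True)" using lc by simp
    fix m assume "m < length (take c p)"
    then have m: "m < c" using lc by simp
    then have "drop m p \<noteq> []" using lc by simp
    moreover have "even (enc (drop m p))" using c(2) m by (simp add: dr_enc)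
    ultimately have "hd (drop m p)" using odd_enc[of "drop m p"] by auto
    then show "take c p ! m = replicate c True ! m" using m lc by (simp add: hd_drop_conv_nth)
  qed
  define rest where "rest = drop (Suc c) p"
  have "drop c p = hd (drop c p) # tl (drop c p)" using dc(1) by simp
  also have "tl (drop c p) = rest" unfolding rest_def by (simp add: drop_Suc tl_drop)
  finally have dcp: "drop c p = False # rest" using dc(2) by simp
  have "p = take c p @ drop c p" by simp
  then have p: "p = replicate c True @ False # rest" unfolding tk dcp .
  have er: "dr (Suc c) ?e = enc rest" by (simp add: dr_enc rest_def)
  define N where "N = c + c + mL c ?e"
  have h: "(2 ^ N - Suc (enc rest)) + (Suc (Suc (enc rest)) - 2 ^ Suc N) = 0"
    using c(3) unfolding mCHK_def er N_def .
  have "2 ^ N \<le> enc rest + 1" "enc rest + 1 < 2 ^ Suc N" using h by linarith+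
  then have lr: "length rest = N" using len_from_enc by blast
  define u1 where "u1 = take c rest"
  define u2 where "u2 = take c (drop c rest)"
  define w where "w = drop (c + c) rest"
  have l12: "length u1 = c" "length u2 = c" using lr by (auto simp: u1_def u2_def N_def)
  have "drop c (drop c rest) = w" unfolding w_def by simp
  then have "u2 @ w = drop c rest" unfolding u2_def by (metis append_take_drop_id)
  then have rest: "rest = u1 @ u2 @ w" unfolding u1_def by simp
  have pp: "p = prog c u1 u2 w" using p rest by (simp add: prog_def)
  note U = mU_parts[OF l12, of w, folded pp]
  have lw: "length w = mL c ?e" using lr by (simp add: w_def N_def)
  have v: "valid c u1 u2 w"
    using l12 lw enc_bounds[of u1] by (simp add: valid_def mL_def U)
  have "runs MACH p (outp c u2 w)" using runs_prog[OF v] pp by simp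
  then have "q = outp c u2 w" using r unfolding runs_def using eval_det enc_inj by metis
  then show ?thesis using v pp by blast
qed

lemma prog_nth: "m < c \<Longrightarrow> prog c u1 u2 w ! m = True" "prog c u1 u2 w ! c = False"
  "length (prog c u1 u2 w) = Suc (c + length u1 + length u2 + length w)"
  by (auto simp: prog_def nth_append)

lemma prog_c_eq:
  assumes "prog c u1 u2 w @ r = prog c' u1' u2' w'"
  shows "c = c'"
proof (rule ccontr)
  let ?p = "prog c u1 u2 w" and ?p' = "prog c' u1' u2' w'"
  have nth: "m < length ?p \<Longrightarrow> ?p' ! m = ?p ! m" for m
    using assms[symmetric] by (simp add: nth_append)
  assume "c \<noteq> c'"
  then consider "c < c'" | "c' < c" by linarith
  then show False
  proof cases
    case 1
    have "c < length ?p" by (simp add: prog_nth)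
    then have "?p' ! c = False" using nth prog_nth by metis
    then show False using prog_nth(1)[OF 1] by simp
  next
    case 2
    have "c' < length ?p" using 2 by (simp add: prog_nth)
    then have "?p' ! c' = True" using nth prog_nth 2 by metis
    then show False using prog_nth(2) by simp
  qed
qed

lemma pf_MACH: "prefix_free_machine MACH"
  unfolding prefix_free_machine_def
proof (intro allI impI, elim conjE exE)
  fix p p' q q' r
  assume r1: "runs MACH p q" and r2: "runs MACH p' q'" and pr: "p' = p @ r"
  obtain c u1 u2 w where a: "valid c u1 u2 w" "p = prog c u1 u2 w" using runs_MACH_form[OF r1] by blast
  obtain c' u1' u2' w' where b: "valid c' u1' u2' w'" "p' = prog c' u1' u2' w'" using runs_MACH_form[OF r2] by blast
  have cc: "c = c'" using prog_c_eq pr a b by metis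
  have "u1 = take c (drop (Suc c) p)" using a by (simp add: prog_def valid_def)
  moreover have "u1' = take c (drop (Suc c) p')" using b cc by (simp add: prog_def valid_def)
  moreover have "take c (drop (Suc c) p') = take c (drop (Suc c) p)"
    using pr a by (simp add: prog_def valid_def)
  ultimately have "u1 = u1'" by simp
  then have "length p = length p'" using a b cc by (simp add: prog_nth valid_def)
  then show "p = p'" using pr by simp
qed

lemma enc_surj: "\<exists>u. enc u = n"
proof (induction n rule: less_induct)
  case (less n)
  show ?case
  proof (cases "n = 0")
    case True then show ?thesis by (intro exI[of _ "[]"]) simp
  next
    case False
    show ?thesis
    proof (cases "odd n")
      case True
      obtain u where "enc u = (n - 1) div 2" using less False by (metis div_le_dividend le_less_trans diff_less less_one not_gr_zero div_less_dividend one_less_numeral_iff semiring_norm(76))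
      then have "enc (False # u) = n" using True by simp
      then show ?thesis by blast
    next
      case ev: False
      obtain u where "enc u = (n - 2) div 2" using less False by (metis div_le_dividend le_less_trans diff_less zero_less_numeral not_gr_zero)
      then have "enc (True # u) = n" using ev False by simp presburger
      then show ?thesis by blast
    qed
  qed
qed

lemma code_exists: "x < 2 ^ c \<Longrightarrow> \<exists>u. length u = c \<and> enc u = x + 2 ^ c - 1"
proof -
  assume x: "x < 2 ^ c"
  obtain u where u: "enc u = x + 2 ^ c - 1" using enc_surj by blast
  have "2 ^ c \<le> enc u + 1" "enc u + 1 < 2 ^ Suc c" using u x by auto
  then have "c = length u" by (rule len_from_enc)
  then show ?thesis using u by auto
qed

lemma prog_exists:
  assumes "length w < 2 ^ c" "m < 2 ^ c"
  shows "\<exists>p. runs MACH p (w @ replicate m False) \<and> length p = Suc (3 * c + length w)"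
proof -
  obtain u1 where u1: "length u1 = c" "enc u1 = length w + 2 ^ c - 1" using code_exists assms(1) by blast
  obtain u2 where u2: "length u2 = c" "enc u2 = m + 2 ^ c - 1" using code_exists assms(2) by blast
  have v: "valid c u1 u2 w" using u1 u2 by (simp add: valid_def)
  have o: "outp c u2 w = w @ replicate m False" using u2 by (simp add: outp_def)
  show ?thesis using runs_prog[OF v] o u1 u2 by (intro exI[of _ "prog c u1 u2 w"]) (simp add: prog_nth)
qed

lemma KM_le: "runs M p q \<Longrightarrow> KM M q \<le> enat (length p)"
  unfolding KM_def by (rule INF_lower2[of p]) auto

lemma optimal_bound:
  assumes "optimal_pf U"
  obtains cU where "\<And>w m c. length w < 2 ^ c \<Longrightarrow> m < 2 ^ c \<Longrightarrow>
     KM U (w @ replicate m False) \<le> enat (Suc (3 * c + length w) + cU)"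
proof -
  obtain cU where cU: "\<And>\<sigma>. KM U \<sigma> \<le> KM MACH \<sigma> + enat cU"
    using assms pf_MACH unfolding optimal_pf_def by blast
  have "KM U (w @ replicate m False) \<le> enat (Suc (3 * c + length w) + cU)"
    if a: "length w < 2 ^ c" "m < 2 ^ c" for w m c
  proof -
    obtain p where p: "runs MACH p (w @ replicate m False)" "length p = Suc (3 * c + length w)"
      using prog_exists[OF a] by blast
    have "KM U (w @ replicate m False) \<le> KM MACH (w @ replicate m False) + enat cU" by (rule cU)
    also have "\<dots> \<le> enat (length p) + enat cU" using KM_le[OF p(1)] by (rule add_right_mono)
    finally show ?thesis using p(2) by simp
  qed
  then show ?thesis using that by blast
qed

definition SP :: "recf \<Rightarrow> bool list \<Rightarrow> bool list" where
  "SP U \<sigma> = arg_min length (\<lambda>p. runs U p \<sigma>)"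

lemma KM_finite: assumes "optimal_pf U" shows "\<exists>p. runs U p \<sigma>"
proof -
  obtain cU where cU: "\<And>w m c. length w < 2 ^ c \<Longrightarrow> m < 2 ^ c \<Longrightarrow>
     KM U (w @ replicate m False) \<le> enat (Suc (3 * c + length w) + cU)"
    using optimal_bound[OF assms] by blast
  have "length \<sigma> < 2 ^ length \<sigma>" by simp
  then have "KM U \<sigma> \<le> enat (Suc (3 * length \<sigma> + length \<sigma>) + cU)" using cU[of \<sigma> "length \<sigma>" 0] by simp
  then have "KM U \<sigma> \<noteq> \<infinity>" by (cases "KM U \<sigma>") auto
  then show ?thesis unfolding KM_def by (metis INF_empty empty_Collect_eq top_enat_def)
qed

lemma SP: assumes "optimal_pf U"
  shows "runs U (SP U \<sigma>) \<sigma>" "KM U \<sigma> = enat (length (SP U \<sigma>))" "K U \<sigma> = length (SP U \<sigma>)"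
proof -
  obtain p where p: "runs U p \<sigma>" using KM_finite[OF assms] by blast
  note a = arg_min_nat_lemma[of "\<lambda>p. runs U p \<sigma>" p length, OF p, folded SP_def]
  show "runs U (SP U \<sigma>) \<sigma>" using a by blast
  show km: "KM U \<sigma> = enat (length (SP U \<sigma>))"
    unfolding KM_def
    by (rule antisym) (auto intro!: INF_lower2[of "SP U \<sigma>"] INF_greatest simp: a)
  show "K U \<sigma> = length (SP U \<sigma>)" by (simp add: K_def km)
qed

lemma K_bound:
  assumes "optimal_pf U"
  obtains cU where "\<And>w m c. length w < 2 ^ c \<Longrightarrow> m < 2 ^ c \<Longrightarrow>
     K U (w @ replicate m False) \<le> Suc (3 * c + length w) + cU"
proof -
  obtain cU where cU: "\<And>w m c. length w < 2 ^ c \<Longrightarrow> m < 2 ^ c \<Longrightarrow>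
     KM U (w @ replicate m False) \<le> enat (Suc (3 * c + length w) + cU)"
    using optimal_bound[OF assms] by blast
  show ?thesis
    by (rule that) (use cU SP(2)[OF assms] SP(3)[OF assms] in fastforce)
qed

definition ext :: "bool list \<Rightarrow> bool list \<Rightarrow> bool" where
  "ext t p \<longleftrightarrow> (\<exists>r. p = t @ r)"

lemma ext_split: "ext t p \<longleftrightarrow> p = t \<or> ext (t @ [False]) p \<or> ext (t @ [True]) p"
proof
  assume "ext t p" then obtain r where r: "p = t @ r" by (auto simp: ext_def)
  show "p = t \<or> ext (t @ [False]) p \<or> ext (t @ [True]) p"
  proof (cases r)
    case Nil then show ?thesis using r by simp
  next
    case (Cons b r') then show ?thesis using r by (cases b) (auto simp: ext_def)
  qed
next
  assume "p = t \<or> ext (t @ [False]) p \<or> ext (t @ [True]) p"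
  then show "ext t p" by (auto simp: ext_def)
qed

lemma kraft_aux:
  assumes fin: "finite P" and pf: "\<And>p q. p \<in> P \<Longrightarrow> q \<in> P \<Longrightarrow> ext p q \<Longrightarrow> p = q"
    and M: "\<And>p. p \<in> P \<Longrightarrow> length p \<le> M"
  shows "M \<le> length t + n \<Longrightarrow> (\<Sum>p\<in>{p\<in>P. ext t p}. (1/2::real) ^ length p) \<le> (1/2) ^ length t"
proof (induction n arbitrary: t)
  case 0
  have "{p\<in>P. ext t p} \<subseteq> {t}"
  proof
    fix p assume "p \<in> {p\<in>P. ext t p}"
    then obtain r where "p \<in> P" "p = t @ r" by (auto simp: ext_def)
    then show "p \<in> {t}" using M[of p] 0 by (cases r) auto
  qed
  then consider "{p\<in>P. ext t p} = {}" | "{p\<in>P. ext t p} = {t}" by blast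
  then show ?case
  proof cases
    case 1 then show ?thesis by (simp only: sum.empty) simp
  next
    case 2 then show ?thesis by simp
  qed
next
  case (Suc n)
  show ?case
  proof (cases "t \<in> P")
    case True
    have "{p\<in>P. ext t p} = {t}" using pf True by (auto simp: ext_def)
    then show ?thesis by simp
  next
    case False
    have eq: "{p\<in>P. ext t p} = {p\<in>P. ext (t @ [False]) p} \<union> {p\<in>P. ext (t @ [True]) p}"
      using False ext_split[of t] by auto
    have dis: "{p\<in>P. ext (t @ [False]) p} \<inter> {p\<in>P. ext (t @ [True]) p} = {}"
      by (auto simp: ext_def)
    have "(\<Sum>p\<in>{p\<in>P. ext t p}. (1/2::real) ^ length p) =
       (\<Sum>p\<in>{p\<in>P. ext (t @ [False]) p}. (1/2::real) ^ length p) + (\<Sum>p\<in>{p\<in>P. ext (t @ [True]) p}. (1/2::real) ^ length p)"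
      unfolding eq using fin dis by (intro sum.union_disjoint) auto
    also have "\<dots> \<le> (1/2) ^ length (t @ [False]) + (1/2) ^ length (t @ [True])"
      using Suc.IH[of "t @ [False]"] Suc.IH[of "t @ [True]"] Suc.prems by (intro add_mono) auto
    also have "\<dots> = (1/2) ^ length t" by simp
    finally show ?thesis .
  qed
qed

lemma kraft:
  assumes fin: "finite P" and pf: "\<And>p q. p \<in> P \<Longrightarrow> q \<in> P \<Longrightarrow> ext p q \<Longrightarrow> p = q"
  shows "(\<Sum>p\<in>P. (1/2::real) ^ length p) \<le> 1"
proof -
  define M where "M = Max (insert 0 (length ` P))"
  have M: "\<And>p. p \<in> P \<Longrightarrow> length p \<le> M" unfolding M_def using fin by auto
  have "{p\<in>P. ext [] p} = P" by (auto simp: ext_def)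
  then show ?thesis using kraft_aux[OF fin pf M, of "[]" M] by simp
qed

lemma kraft_K:
  assumes "optimal_pf U" "finite Q"
  shows "(\<Sum>\<sigma>\<in>Q. (1/2::real) ^ K U \<sigma>) \<le> 1"
proof -
  have inj: "inj_on (SP U) Q"
  proof
    fix x y assume "SP U x = SP U y"
    then have "eval U [enc (SP U x)] (enc x)" "eval U [enc (SP U x)] (enc y)"
      using SP(1)[OF assms(1)] unfolding runs_def by metis+
    then show "x = y" using eval_det enc_inj by metis
  qed
  have pf: "p = q" if h: "p \<in> SP U ` Q" "q \<in> SP U ` Q" "ext p q" for p q
  proof -
    obtain x y where "p = SP U x" "q = SP U y" using h(1,2) by blast
    then have "runs U p x" "runs U q y" using SP(1)[OF assms(1)] by auto
    then show ?thesis using assms(1) h(3) unfolding optimal_pf_def prefix_free_machine_def ext_def by blast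
  qed
  have "(\<Sum>\<sigma>\<in>Q. (1/2::real) ^ K U \<sigma>) = (\<Sum>p\<in>SP U ` Q. (1/2::real) ^ length p)"
    using inj by (simp add: sum.reindex SP(3)[OF assms(1)])
  also have "\<dots> \<le> 1" using kraft[OF _ pf] assms(2) by blast
  finally show ?thesis .
qed

lemma hausdorff_zeroI:
  assumes "\<And>n \<epsilon>. \<epsilon> > 0 \<Longrightarrow> \<exists>S. A \<subseteq> (\<Union>\<sigma>\<in>S. cyl \<sigma>) \<and> (\<forall>\<sigma>\<in>S. length \<sigma> \<ge> n) \<and>
      (\<Sum>\<^sub>\<infinity>\<sigma>\<in>S. ennreal (f (2 powr (- real (length \<sigma>))))) \<le> ennreal \<epsilon>"
  shows "hausdorff f A = 0"
proof -
  have "(INF S \<in> {S. A \<subseteq> (\<Union>\<sigma>\<in>S. cyl \<sigma>) \<and> (\<forall>\<sigma>\<in>S. length \<sigma> \<ge> n)}.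
      (\<Sum>\<^sub>\<infinity>\<sigma>\<in>S. ennreal (f (2 powr (- real (length \<sigma>)))))) \<le> 0" for n
  proof (rule ennreal_le_epsilon)
    fix e :: real assume "0 < e"
    then obtain S where S1: "S \<in> {S. A \<subseteq> (\<Union>\<sigma>\<in>S. cyl \<sigma>) \<and> (\<forall>\<sigma>\<in>S. length \<sigma> \<ge> n)}"
      and S2: "(\<Sum>\<^sub>\<infinity>\<sigma>\<in>S. ennreal (f (2 powr (- real (length \<sigma>))))) \<le> ennreal e"
      using assms[of e n] by auto
    show "(INF S \<in> {S. A \<subseteq> (\<Union>\<sigma>\<in>S. cyl \<sigma>) \<and> (\<forall>\<sigma>\<in>S. length \<sigma> \<ge> n)}.
      (\<Sum>\<^sub>\<infinity>\<sigma>\<in>S. ennreal (f (2 powr (- real (length \<sigma>)))))) \<le> 0 + ennreal e"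
    proof -
      have "(INF S \<in> {S. A \<subseteq> (\<Union>\<sigma>\<in>S. cyl \<sigma>) \<and> (\<forall>\<sigma>\<in>S. length \<sigma> \<ge> n)}.
      (\<Sum>\<^sub>\<infinity>\<sigma>\<in>S. ennreal (f (2 powr (- real (length \<sigma>)))))) \<le> (\<Sum>\<^sub>\<infinity>\<sigma>\<in>S. ennreal (f (2 powr (- real (length \<sigma>)))))"
        by (rule INF_lower[OF S1])
      then show ?thesis using S2 by simp
    qed
  qed
  then have "hausdorff f A \<le> 0" unfolding hausdorff_def by (rule SUP_least)
  then show ?thesis by simp
qed

lemma ev_small:
  fixes \<delta> c \<epsilon> :: real assumes "\<delta> > 0" "c > 0" "\<epsilon> > 0"
  shows "eventually (\<lambda>m::nat. (1/2::real) ^ m < \<delta> \<and> 2 powr (- c * real m) \<le> \<epsilon>) sequentially"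
proof -
  have "((\<lambda>m::nat. (1/2::real) ^ m) \<longlongrightarrow> 0) sequentially" by (rule LIMSEQ_power_zero) simp
  then have 1: "eventually (\<lambda>m::nat. (1/2::real) ^ m < \<delta>) sequentially"
    using assms(1) by (simp add: order_tendsto_iff)
  have e: "2 powr (- c * real m) = (2 powr (- c)) ^ m" for m
    by (simp add: powr_realpow[symmetric] powr_powr mult.commute)
  have "(2::real) powr (- c) < 1" using assms(2) by (simp add: powr_less_one)
  then have "((\<lambda>m::nat. (2 powr (- c)) ^ m) \<longlongrightarrow> 0) sequentially"
    by (intro LIMSEQ_power_zero) auto
  then have "((\<lambda>m::nat. 2 powr (- c * real m)) \<longlongrightarrow> 0) sequentially" unfolding e .
  then have 2: "eventually (\<lambda>m::nat. 2 powr (- c * real m) < \<epsilon>) sequentially"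
    using assms(3) by (simp add: order_tendsto_iff)
  show ?thesis using eventually_conj[OF 1 2] by (rule eventually_mono) auto
qed

lemma liminf_less_frequently:
  fixes X :: "nat \<Rightarrow> ereal"
  assumes "liminf X < C"
  shows "\<exists>m\<ge>N. X m < C"
proof -
  from assms obtain y where y: "y < C" "\<not> eventually (\<lambda>x. y < X x) sequentially"
    using le_Liminf_iff[of C sequentially X] by (auto simp: not_le)
  then have "\<exists>m\<ge>N. \<not> y < X m" unfolding eventually_sequentially by blast
  then show ?thesis using y(1) by (meson le_less_trans not_less)
qed

lemma exists_a:
  fixes s :: real assumes "0 < s" "d < ereal s"
  shows "\<exists>k::nat. d < ereal (s - s / (real k + 2))"
proof (cases d)
  case (real r)
  then have "r < s" using assms by simp
  obtain k :: nat where k: "s / (s - r) < real k" using reals_Archimedean2 by blast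
  have "s / (real k + 2) < s - r"
    using k \<open>r < s\<close> assms(1) by (simp add: field_simps)
  then show ?thesis using real by (intro exI[of _ k]) simp
next
  case PInf then show ?thesis using assms by simp
next
  case MInf then show ?thesis by simp
qed

lemma powr_half: "(2::real) powr (- real m) = (1/2) ^ m"
  by (simp add: powr_minus powr_realpow power_one_over inverse_eq_divide)

lemma partA:
  assumes U: "optimal_pf U" and s: "0 < s"
    and le: "\<forall>r. 0 < r \<and> r < s \<longrightarrow> le_star f (\<lambda>x. x powr r)"
  shows "hausdorff f (D_lt U s) = 0"
proof (rule hausdorff_zeroI)
  fix n :: nat and \<epsilon> :: real assume \<epsilon>: "\<epsilon> > 0"
  define a where "a k = s - s / (real k + 2)" for k :: nat
  define b where "b k = s - s / (2 * (real k + 2))" for k :: nat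
  have ab: "0 < a k" "a k < b k" "b k < s" for k
  proof -
    define t where "t = s / (real k + 2)"
    have p: "0 < t" using s by (simp add: t_def)
    have q: "t < s" using s by (simp add: divide_less_eq t_def)
    have e: "a k = s - t" "b k = s - t / 2" by (simp_all add: a_def b_def t_def)
    show "0 < a k" "a k < b k" "b k < s" unfolding e using p q by simp_all
  qed
  have "\<forall>k. \<exists>\<delta>>0. \<forall>x. 0 < x \<and> x < \<delta> \<longrightarrow> f x \<le> x powr b k"
    using le ab unfolding le_star_def by (meson less_trans)
  then obtain \<delta> where \<delta>: "\<And>k. \<delta> k > 0" "\<And>k x. 0 < x \<Longrightarrow> x < \<delta> k \<Longrightarrow> f x \<le> x powr b k"
    by metis
  have "\<forall>k. \<exists>N0. \<forall>m\<ge>N0. (1/2::real) ^ m < \<delta> k \<and> 2 powr (- (b k - a k) * real m) \<le> \<epsilon>"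
  proof
    fix k
    have "b k - a k > 0" using ab(2)[of k] by simp
    from ev_small[OF \<delta>(1) this \<epsilon>]
    show "\<exists>N0. \<forall>m\<ge>N0. (1/2::real) ^ m < \<delta> k \<and> 2 powr (- (b k - a k) * real m) \<le> \<epsilon>"
      unfolding eventually_sequentially by blast
  qed
  then obtain N0 where N0: "\<And>k m. m \<ge> N0 k \<Longrightarrow> (1/2::real) ^ m < \<delta> k \<and> 2 powr (- (b k - a k) * real m) \<le> \<epsilon>"
    by metis
  define N where "N k = max (Suc n) (N0 k)" for k
  define S where "S = {\<sigma>. \<exists>k. length \<sigma> \<ge> N k \<and> real (K U \<sigma>) < a k * real (length \<sigma>)}"
  show "\<exists>S. D_lt U s \<subseteq> (\<Union>\<sigma>\<in>S. cyl \<sigma>) \<and> (\<forall>\<sigma>\<in>S. length \<sigma> \<ge> n) \<and>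
      (\<Sum>\<^sub>\<infinity>\<sigma>\<in>S. ennreal (f (2 powr (- real (length \<sigma>))))) \<le> ennreal \<epsilon>"
  proof (intro exI[of _ S] conjI)
    show "D_lt U s \<subseteq> (\<Union>\<sigma>\<in>S. cyl \<sigma>)"
    proof
      fix x assume "x \<in> D_lt U s"
      then have "dim U x < ereal s" by (simp add: D_lt_def)
      then obtain k where k: "dim U x < ereal (a k)" using exists_a[OF s] unfolding a_def by blast
      then obtain m where m: "m \<ge> N k" "ereal (real (K U (restr x m)) / real m) < ereal (a k)"
        using liminf_less_frequently unfolding dim_def by blast
      have "m > 0" using m(1) by (simp add: N_def)
      then have "real (K U (restr x m)) < a k * real m" using m(2) by (simp add: field_simps)
      then have "restr x m \<in> S" using m(1) by (auto simp: S_def restr_def)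
      moreover have "x \<in> cyl (restr x m)" by (simp add: cyl_def restr_def)
      ultimately show "x \<in> (\<Union>\<sigma>\<in>S. cyl \<sigma>)" by blast
    qed
    show "\<forall>\<sigma>\<in>S. length \<sigma> \<ge> n" by (auto simp: S_def N_def)
    have pt: "ennreal (f (2 powr (- real (length \<sigma>)))) \<le> ennreal \<epsilon> * ennreal ((1/2) ^ K U \<sigma>)"
      if hs: "\<sigma> \<in> S" for \<sigma>
    proof -
      obtain k where k: "length \<sigma> \<ge> N k" "real (K U \<sigma>) < a k * real (length \<sigma>)"
        using hs by (auto simp: S_def)
      let ?m = "length \<sigma>"
      have nk: "(1/2::real) ^ ?m < \<delta> k" "2 powr (- (b k - a k) * real ?m) \<le> \<epsilon>"
        using N0[of k ?m] k(1) by (auto simp: N_def)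
      have "f (2 powr (- real ?m)) \<le> (2 powr (- real ?m)) powr b k"
        using \<delta>(2)[of "2 powr (- real ?m)" k] nk(1) by (simp add: powr_half)
      also have "\<dots> = 2 powr (- a k * real ?m) * 2 powr (- (b k - a k) * real ?m)"
        by (simp add: powr_powr powr_add[symmetric] algebra_simps)
      also have "\<dots> \<le> 2 powr (- real (K U \<sigma>)) * \<epsilon>"
        using k(2) nk(2) by (intro mult_mono) auto
      also have "\<dots> = \<epsilon> * (1/2) ^ K U \<sigma>" by (simp add: powr_half)
      finally show ?thesis by (simp add: ennreal_mult[symmetric] \<epsilon>[THEN less_imp_le] ennreal_leI)
    qed
    show "(\<Sum>\<^sub>\<infinity>\<sigma>\<in>S. ennreal (f (2 powr (- real (length \<sigma>))))) \<le> ennreal \<epsilon>"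
    proof (rule infsum_le_finite_sums[OF nonneg_summable_on_complete])
      fix F assume F: "finite F" "F \<subseteq> S"
      have "(\<Sum>\<sigma>\<in>F. ennreal (f (2 powr (- real (length \<sigma>))))) \<le> (\<Sum>\<sigma>\<in>F. ennreal (\<epsilon> * (1/2) ^ K U \<sigma>))"
        using pt F(2) by (intro sum_mono) (auto simp: ennreal_mult \<epsilon>[THEN less_imp_le])
      also have "\<dots> = ennreal (\<Sum>\<sigma>\<in>F. \<epsilon> * (1/2) ^ K U \<sigma>)"
        by (rule sum_ennreal) (use \<epsilon> in simp)
      also have "\<dots> \<le> ennreal \<epsilon>"
      proof (rule ennreal_leI)
        have "(\<Sum>\<sigma>\<in>F. \<epsilon> * (1/2) ^ K U \<sigma>) = \<epsilon> * (\<Sum>\<sigma>\<in>F. (1/2) ^ K U \<sigma>)"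
          by (simp add: sum_distrib_left)
        also have "\<dots> \<le> \<epsilon> * 1" using kraft_K[OF U F(1)] \<epsilon> by (intro mult_left_mono) auto
        finally show "(\<Sum>\<sigma>\<in>F. \<epsilon> * (1/2) ^ K U \<sigma>) \<le> \<epsilon>" by simp
      qed
      finally show "(\<Sum>\<sigma>\<in>F. ennreal (f (2 powr (- real (length \<sigma>))))) \<le> ennreal \<epsilon>" .
    qed simp
  qed
qed

definition compat :: "(nat \<Rightarrow> bool) \<Rightarrow> bool list \<Rightarrow> bool" where
  "compat fr \<tau> \<longleftrightarrow> (\<forall>i<length \<tau>. \<not> fr i \<longrightarrow> \<not> \<tau> ! i)"

definition EE :: "(nat \<Rightarrow> bool) \<Rightarrow> seq set" where
  "EE fr = {x. \<forall>i. \<not> fr i \<longrightarrow> \<not> x i}"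

definition Fc :: "(nat \<Rightarrow> bool) \<Rightarrow> nat \<Rightarrow> nat" where
  "Fc fr l = (\<Sum>i<l. if fr i then 1 else 0)"

definition mu :: "(nat \<Rightarrow> bool) \<Rightarrow> bool list \<Rightarrow> real" where
  "mu fr \<tau> = (if compat fr \<tau> then (1/2) ^ Fc fr (length \<tau>) else 0)"

lemma Fc_Suc: "Fc fr (Suc l) = Fc fr l + (if fr l then 1 else 0)"
  by (simp add: Fc_def)

lemma Fc_mono: "l \<le> l' \<Longrightarrow> Fc fr l \<le> Fc fr l'"
  unfolding Fc_def by (rule sum_mono2) auto

lemma compat_snoc: "compat fr (\<tau> @ [b]) \<longleftrightarrow> compat fr \<tau> \<and> (\<not> fr (length \<tau>) \<longrightarrow> \<not> b)"
  by (auto simp: compat_def nth_append less_Suc_eq)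

lemma mu_split: "mu fr \<tau> = mu fr (\<tau> @ [False]) + mu fr (\<tau> @ [True])"
  by (auto simp: mu_def compat_snoc Fc_Suc)

lemma mu_nonneg: "mu fr \<tau> \<ge> 0" by (simp add: mu_def)

lemma mu_ext: assumes "ext \<sigma> \<tau>" shows "mu fr \<tau> \<le> mu fr \<sigma>"
proof -
  obtain r where r: "\<tau> = \<sigma> @ r" using assms by (auto simp: ext_def)
  show ?thesis
  proof (cases "compat fr \<tau>")
    case True
    have "compat fr \<sigma>" unfolding compat_def
    proof (intro allI impI)
      fix i assume i: "i < length \<sigma>" "\<not> fr i"
      have "i < length \<tau>" using i(1) r by simp
      then have "\<not> \<tau> ! i" using True i(2) unfolding compat_def by blast
      then show "\<not> \<sigma> ! i" using i(1) r by (simp add: nth_append)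
    qed
    moreover have "Fc fr (length \<sigma>) \<le> Fc fr (length \<tau>)" using r by (intro Fc_mono) simp
    ultimately show ?thesis using True by (simp add: mu_def power_decreasing)
  next
    case False then show ?thesis by (simp add: mu_def)
  qed
qed

lemma ext_cyl: assumes "x \<in> cyl \<tau>" "x \<in> cyl \<sigma>" "length \<sigma> \<le> length \<tau>" shows "ext \<sigma> \<tau>"
proof -
  have "take (length \<sigma>) \<tau> = \<sigma>"
  proof (rule nth_equalityI)
    show "length (take (length \<sigma>) \<tau>) = length \<sigma>" using assms(3) by simp
    fix i assume "i < length (take (length \<sigma>) \<tau>)"
    then have i: "i < length \<sigma>" "i < length \<tau>" using assms(3) by auto
    then show "take (length \<sigma>) \<tau> ! i = \<sigma> ! i" using assms(1,2) by (simp add: cyl_def) metis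
  qed
  then show ?thesis unfolding ext_def by (metis append_take_drop_id)
qed

definition zext :: "bool list \<Rightarrow> seq" where
  "zext \<tau> i = (if i < length \<tau> then \<tau> ! i else False)"

lemma zext_in: "compat fr \<tau> \<Longrightarrow> zext \<tau> \<in> EE fr \<inter> cyl \<tau>"
  by (auto simp: zext_def EE_def cyl_def compat_def)

lemma mass_aux:
  assumes fin: "finite T" and M: "\<And>\<sigma>. \<sigma> \<in> T \<Longrightarrow> length \<sigma> \<le> M"
  shows "M \<le> length \<tau> + n \<Longrightarrow> (\<forall>x\<in>EE fr \<inter> cyl \<tau>. \<exists>\<sigma>\<in>T. x \<in> cyl \<sigma>) \<Longrightarrow>
     mu fr \<tau> \<le> (\<Sum>\<sigma>\<in>{\<sigma>\<in>T. ext \<sigma> \<tau> \<or> ext \<tau> \<sigma>}. mu fr \<sigma>)"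
proof (induction n arbitrary: \<tau>)
  case 0
  show ?case
  proof (cases "\<exists>\<sigma>\<in>T. ext \<sigma> \<tau>")
    case True
    then obtain \<sigma> where \<sigma>: "\<sigma> \<in> T" "ext \<sigma> \<tau>" by blast
    have "mu fr \<tau> \<le> mu fr \<sigma>" using mu_ext[OF \<sigma>(2)] .
    also have "\<dots> \<le> (\<Sum>\<sigma>\<in>{\<sigma>\<in>T. ext \<sigma> \<tau> \<or> ext \<tau> \<sigma>}. mu fr \<sigma>)"
      using \<sigma> fin by (intro member_le_sum) (auto simp: mu_nonneg)
    finally show ?thesis .
  next
    case False
    show ?thesis
    proof (cases "compat fr \<tau>")
      case True
      then obtain \<sigma> where \<sigma>: "\<sigma> \<in> T" "zext \<tau> \<in> cyl \<sigma>" using zext_in 0 by blast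
      have "ext \<sigma> \<tau>" using ext_cyl[OF _ \<sigma>(2)] zext_in[OF True] M[OF \<sigma>(1)] 0(1) by auto
      then show ?thesis using False \<sigma>(1) by blast
    next
      case False
      then show ?thesis by (simp add: mu_def sum_nonneg mu_nonneg)
    qed
  qed
next
  case (Suc n)
  show ?case
  proof (cases "\<exists>\<sigma>\<in>T. ext \<sigma> \<tau>")
    case True
    then obtain \<sigma> where \<sigma>: "\<sigma> \<in> T" "ext \<sigma> \<tau>" by blast
    have "mu fr \<tau> \<le> mu fr \<sigma>" using mu_ext[OF \<sigma>(2)] .
    also have "\<dots> \<le> (\<Sum>\<sigma>\<in>{\<sigma>\<in>T. ext \<sigma> \<tau> \<or> ext \<tau> \<sigma>}. mu fr \<sigma>)"
      using \<sigma> fin by (intro member_le_sum) (auto simp: mu_nonneg)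
    finally show ?thesis .
  next
    case False
    define C where "C b = {\<sigma>\<in>T. ext \<sigma> (\<tau> @ [b]) \<or> ext (\<tau> @ [b]) \<sigma>}" for b
    have cov: "\<forall>x\<in>EE fr \<inter> cyl (\<tau> @ [b]). \<exists>\<sigma>\<in>T. x \<in> cyl \<sigma>" for b
      using Suc.prems(2) by (auto simp: cyl_def nth_append)
    have ih: "mu fr (\<tau> @ [b]) \<le> (\<Sum>\<sigma>\<in>C b. mu fr \<sigma>)" for b
      unfolding C_def using Suc.IH[OF _ cov] Suc.prems(1) by simp
    have Cb: "C b = {\<sigma>\<in>T. ext (\<tau> @ [b]) \<sigma>}" for b
    proof -
      have "ext (\<tau> @ [b]) \<sigma>" if h: "ext \<sigma> (\<tau> @ [b])" "\<sigma> \<in> T" for \<sigma>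
      proof -
        obtain r where r: "\<tau> @ [b] = \<sigma> @ r" using h(1) by (auto simp: ext_def)
        show ?thesis
        proof (cases r rule: rev_cases)
          case Nil then show ?thesis using r by (simp add: ext_def)
        next
          case (snoc r' y)
          then have "\<tau> = \<sigma> @ r'" using r by simp
          then have "ext \<sigma> \<tau>" by (simp add: ext_def)
          then show ?thesis using False h(2) by blast
        qed
      qed
      then show ?thesis unfolding C_def by auto
    qed
    have sub: "C False \<union> C True \<subseteq> {\<sigma>\<in>T. ext \<sigma> \<tau> \<or> ext \<tau> \<sigma>}"
    proof
      fix \<sigma> assume "\<sigma> \<in> C False \<union> C True"
      then obtain b r where "\<sigma> \<in> T" "\<sigma> = \<tau> @ [b] @ r" unfolding Cb ext_def by auto
      then show "\<sigma> \<in> {\<sigma>\<in>T. ext \<sigma> \<tau> \<or> ext \<tau> \<sigma>}" unfolding ext_def by blast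
    qed
    have dis: "C False \<inter> C True = {}"
    proof (rule ccontr)
      assume "C False \<inter> C True \<noteq> {}"
      then obtain \<sigma> r1 r2 where "\<sigma> = \<tau> @ [False] @ r1" "\<sigma> = \<tau> @ [True] @ r2" unfolding Cb ext_def by auto
      then show False by simp
    qed
    have "mu fr \<tau> = mu fr (\<tau> @ [False]) + mu fr (\<tau> @ [True])" by (rule mu_split)
    also have "\<dots> \<le> (\<Sum>\<sigma>\<in>C False. mu fr \<sigma>) + (\<Sum>\<sigma>\<in>C True. mu fr \<sigma>)"
      by (rule add_mono[OF ih ih])
    also have "\<dots> = (\<Sum>\<sigma>\<in>C False \<union> C True. mu fr \<sigma>)"
      using dis fin by (intro sum.union_disjoint[symmetric]) (auto simp: C_def)
    also have "\<dots> \<le> (\<Sum>\<sigma>\<in>{\<sigma>\<in>T. ext \<sigma> \<tau> \<or> ext \<tau> \<sigma>}. mu fr \<sigma>)"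
      using sub fin by (intro sum_mono2) (auto simp: mu_nonneg)
    finally show ?thesis .
  qed
qed

lemma mass:
  assumes fin: "finite T" and cov: "\<forall>x\<in>EE fr. \<exists>\<sigma>\<in>T. x \<in> cyl \<sigma>"
  shows "1 \<le> (\<Sum>\<sigma>\<in>T. mu fr \<sigma>)"
proof -
  define M where "M = Max (insert 0 (length ` T))"
  have M: "\<And>p. p \<in> T \<Longrightarrow> length p \<le> M" unfolding M_def using fin by auto
  have "{\<sigma>\<in>T. ext \<sigma> [] \<or> ext [] \<sigma>} = T" by (auto simp: ext_def)
  moreover have "mu fr [] = 1" by (simp add: mu_def compat_def Fc_def)
  ultimately show ?thesis using mass_aux[OF fin M, of "[]" M fr] cov by simp
qed

lemma cyl_split: "x \<in> cyl \<tau> \<Longrightarrow> x \<in> cyl (\<tau> @ [x (length \<tau>)])"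
  by (auto simp: cyl_def nth_append less_Suc_eq)

lemma cyl_snoc: "x \<in> cyl (\<tau> @ [b]) \<Longrightarrow> x \<in> cyl \<tau>"
  by (auto simp: cyl_def nth_append)

lemma compact_cover:
  assumes cov: "EE fr \<subseteq> (\<Union>\<sigma>\<in>Sc. cyl \<sigma>)"
  shows "\<exists>T\<subseteq>Sc. finite T \<and> (\<forall>x\<in>EE fr. \<exists>\<sigma>\<in>T. x \<in> cyl \<sigma>)"
proof (rule ccontr)
  define good where "good \<tau> \<longleftrightarrow> (\<exists>T\<subseteq>Sc. finite T \<and> (\<forall>x\<in>EE fr \<inter> cyl \<tau>. \<exists>\<sigma>\<in>T. x \<in> cyl \<sigma>))" for \<tau>
  assume "\<not> (\<exists>T\<subseteq>Sc. finite T \<and> (\<forall>x\<in>EE fr. \<exists>\<sigma>\<in>T. x \<in> cyl \<sigma>))"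
  then have g0: "\<not> good []" by (auto simp: good_def cyl_def)
  have step: "\<not> good (\<tau> @ [False]) \<or> \<not> good (\<tau> @ [True])" if "\<not> good \<tau>" for \<tau>
  proof (rule ccontr)
    assume "\<not> (\<not> good (\<tau> @ [False]) \<or> \<not> good (\<tau> @ [True]))"
    then obtain T0 T1 where T: "T0 \<subseteq> Sc" "finite T0" "\<forall>x\<in>EE fr \<inter> cyl (\<tau> @ [False]). \<exists>\<sigma>\<in>T0. x \<in> cyl \<sigma>"
      "T1 \<subseteq> Sc" "finite T1" "\<forall>x\<in>EE fr \<inter> cyl (\<tau> @ [True]). \<exists>\<sigma>\<in>T1. x \<in> cyl \<sigma>"
      unfolding good_def by blast
    have "\<forall>x\<in>EE fr \<inter> cyl \<tau>. \<exists>\<sigma>\<in>T0 \<union> T1. x \<in> cyl \<sigma>"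
    proof
      fix x assume x: "x \<in> EE fr \<inter> cyl \<tau>"
      then have "x \<in> cyl (\<tau> @ [x (length \<tau>)])" using cyl_split by blast
      then show "\<exists>\<sigma>\<in>T0 \<union> T1. x \<in> cyl \<sigma>" using x T(3,6) by (cases "x (length \<tau>)") auto
    qed
    then have "good \<tau>" unfolding good_def using T by (intro exI[of _ "T0 \<union> T1"]) auto
    then show False using that by blast
  qed
  define path where "path = rec_nat [] (\<lambda>k p. if \<not> good (p @ [False]) then p @ [False] else p @ [True])"
  have path0: "path 0 = []" by (simp add: path_def)
  have pathS: "path (Suc k) = (if \<not> good (path k @ [False]) then path k @ [False] else path k @ [True])" for k
    by (simp add: path_def)
  have bad: "\<not> good (path k)" for k
  proof (induction k)
    case 0 then show ?case using g0 path0 by simp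
  next
    case (Suc k) then show ?case using step[OF Suc] pathS[of k] by auto
  qed
  have len: "length (path k) = k" for k by (induction k) (auto simp: path0 pathS)
  have pre: "path k = take k (path (k + d))" for k d
  proof (induction d)
    case 0 then show ?case using len by simp
  next
    case (Suc d)
    obtain b where b: "path (Suc (k + d)) = path (k + d) @ [b]" using pathS[of "k + d"] by metis
    have "take k (path (k + Suc d)) = take k (path (k + d))" using b len[of "k + d"] by simp
    then show ?case using Suc.IH by simp
  qed
  define x where "x i = path (Suc i) ! i" for i
  have pk: "i < k \<Longrightarrow> path k ! i = x i" for i k
  proof -
    assume "i < k"
    then obtain d where k: "k = Suc i + d" using less_iff_Suc_add[of i k] by auto
    have "path (Suc i) = take (Suc i) (path k)" unfolding k by (rule pre)
    then have "path (Suc i) ! i = path k ! i" by simp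
    then show "path k ! i = x i" unfolding x_def by simp
  qed
  have xc: "x \<in> cyl (path k)" for k using pk len by (simp add: cyl_def)
  have xE: "x \<in> EE fr"
    unfolding EE_def mem_Collect_eq
  proof (intro allI impI)
    fix i assume fi: "\<not> fr i"
    have "EE fr \<inter> cyl (path (Suc i)) \<noteq> {}"
    proof
      assume e: "EE fr \<inter> cyl (path (Suc i)) = {}"
      have "good (path (Suc i))" unfolding good_def
        by (rule exI[of _ "{}"]) (use e in blast)
      then show False using bad by blast
    qed
    then obtain y where y: "y \<in> EE fr" "y \<in> cyl (path (Suc i))" by blast
    have "y i = path (Suc i) ! i" using y(2) len by (simp add: cyl_def)
    then have "x i = y i" by (simp add: x_def)
    then show "\<not> x i" using y(1) fi by (simp add: EE_def)
  qed
  then obtain \<sigma> where \<sigma>: "\<sigma> \<in> Sc" "x \<in> cyl \<sigma>" using cov by blast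
  have e1: "ext \<sigma> (path (length \<sigma>))" using ext_cyl[OF xc \<sigma>(2)] len by simp
  then obtain r where r: "path (length \<sigma>) = \<sigma> @ r" by (auto simp: ext_def)
  then have "length r = 0" using len[of "length \<sigma>"] by simp
  then have "path (length \<sigma>) = \<sigma>" using r by simp
  then have "good (path (length \<sigma>))" unfolding good_def using \<sigma>(1)
    by (intro exI[of _ "{\<sigma>}"]) auto
  then show False using bad by blast
qed

lemma H_lower:
  assumes gb: "\<And>l. c * (1/2) ^ (Fc fr l) \<le> f (2 powr (- real l))" and c: "c > 0"
    and fpos: "\<And>l. f (2 powr (- real l)) \<ge> 0" and A: "EE fr \<subseteq> A"
  shows "ennreal c \<le> hausdorff f A"
proof -
  have "ennreal c \<le> (\<Sum>\<^sub>\<infinity>\<sigma>\<in>Sc. ennreal (f (2 powr (- real (length \<sigma>)))))"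
    if Sc: "A \<subseteq> (\<Union>\<sigma>\<in>Sc. cyl \<sigma>)" for Sc
  proof -
    obtain T where T: "T \<subseteq> Sc" "finite T" "\<forall>x\<in>EE fr. \<exists>\<sigma>\<in>T. x \<in> cyl \<sigma>"
      using compact_cover[of fr Sc] Sc A by blast
    have pt: "c * mu fr \<sigma> \<le> f (2 powr (- real (length \<sigma>)))" for \<sigma>
      using gb[of "length \<sigma>"] fpos[of "length \<sigma>"] by (simp add: mu_def)
    have "c = c * 1" by simp
    also have "c * 1 \<le> c * (\<Sum>\<sigma>\<in>T. mu fr \<sigma>)" using mass[OF T(2,3)] c by simp
    also have "\<dots> = (\<Sum>\<sigma>\<in>T. c * mu fr \<sigma>)" by (simp add: sum_distrib_left)
    also have "\<dots> \<le> (\<Sum>\<sigma>\<in>T. f (2 powr (- real (length \<sigma>))))" using pt by (rule sum_mono)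
    finally have "ennreal c \<le> ennreal (\<Sum>\<sigma>\<in>T. f (2 powr (- real (length \<sigma>))))" by (rule ennreal_leI)
    also have "\<dots> = (\<Sum>\<sigma>\<in>T. ennreal (f (2 powr (- real (length \<sigma>)))))"
      using fpos by (intro sum_ennreal[symmetric]) auto
    also have "\<dots> \<le> (\<Sum>\<^sub>\<infinity>\<sigma>\<in>Sc. ennreal (f (2 powr (- real (length \<sigma>)))))"
      unfolding nonneg_infsum_complete[of Sc "\<lambda>\<sigma>. ennreal (f (2 powr (- real (length \<sigma>))))", OF zero_le]
      using T(1,2) by (intro SUP_upper) auto
    finally show ?thesis .
  qed
  then have "ennreal c \<le> (INF Sc \<in> {Sc. A \<subseteq> (\<Union>\<sigma>\<in>Sc. cyl \<sigma>) \<and> (\<forall>\<sigma>\<in>Sc. length \<sigma> \<ge> 0)}.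
      (\<Sum>\<^sub>\<infinity>\<sigma>\<in>Sc. ennreal (f (2 powr (- real (length \<sigma>))))))"
    by (intro INF_greatest) auto
  also have "\<dots> \<le> hausdorff f A" unfolding hausdorff_def by (rule SUP_upper) simp
  finally show ?thesis .
qed

definition blockfr :: "(nat \<Rightarrow> nat) \<Rightarrow> (nat \<Rightarrow> nat) \<Rightarrow> nat \<Rightarrow> bool" where
  "blockfr a h i \<longleftrightarrow> (\<exists>j. a j \<le> i \<and> i < a j + h j)"

locale blocks =
  fixes a h :: "nat \<Rightarrow> nat"
  assumes a0: "a 0 = 0" and ah: "\<And>j. a j + h j \<le> a (Suc j)" and alt: "\<And>j. a j < a (Suc j)"
begin

lemma smono: "strict_mono a" using alt by (rule strict_monoI_Suc)

lemma a_ge: "j \<le> a j"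
  using smono by (rule strict_mono_imp_increasing)

lemma a_le: "j' < j \<Longrightarrow> a (Suc j') \<le> a j"
  using smono by (metis Suc_leI strict_mono_less_eq)

lemma block_exists: "\<exists>j. a j \<le> l \<and> l < a (Suc j)"
proof -
  have "l < a (Suc l)" using a_ge[of "Suc l"] by simp
  then have ex: "\<exists>j. l < a (Suc j)" by blast
  define j where "j = (LEAST j. l < a (Suc j))"
  have 1: "l < a (Suc j)" unfolding j_def using ex by (rule LeastI_ex)
  have 2: "a j \<le> l"
  proof (cases j)
    case 0 then show ?thesis by (simp add: a0)
  next
    case (Suc j')
    then have "\<not> l < a (Suc j')" unfolding j_def using not_less_Least[of j' "\<lambda>j. l < a (Suc j)"]
      by (metis j_def lessI)
    then show ?thesis using Suc by simp
  qed
  show ?thesis using 1 2 by blast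
qed

lemma fr_block: assumes "a j \<le> i" "i < a (Suc j)" shows "blockfr a h i \<longleftrightarrow> i < a j + h j"
proof
  assume "blockfr a h i"
  then obtain j' where j': "a j' \<le> i" "i < a j' + h j'" by (auto simp: blockfr_def)
  have "j' = j"
  proof (rule ccontr)
    assume "j' \<noteq> j"
    then consider "j' < j" | "j < j'" by linarith
    then show False
    proof cases
      case 1 then show False using a_le[OF 1] ah[of j'] j' assms by linarith
    next
      case 2 then show False using a_le[OF 2] j' assms by linarith
    qed
  qed
  then show "i < a j + h j" using j' by simp
next
  assume "i < a j + h j" then show "blockfr a h i" using assms by (auto simp: blockfr_def)
qed

lemma Fc_free: "k \<le> h j \<Longrightarrow> Fc (blockfr a h) (a j + k) = Fc (blockfr a h) (a j) + k"
proof (induction k)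
  case 0 then show ?case by simp
next
  case (Suc k)
  have "blockfr a h (a j + k)" using Suc.prems unfolding blockfr_def by (intro exI[of _ j]) simp
  then show ?case using Suc by (simp add: Fc_Suc)
qed

lemma Fc_h: "h j \<le> Fc (blockfr a h) l" if "a j + h j \<le> l"
proof -
  have "h j \<le> Fc (blockfr a h) (a j + h j)" using Fc_free[of "h j" j] by simp
  also have "\<dots> \<le> Fc (blockfr a h) l" using that by (rule Fc_mono)
  finally show ?thesis .
qed

lemma mass_bound:
  fixes g :: "nat \<Rightarrow> real" and c :: real
  assumes anti: "\<And>n m. n \<le> m \<Longrightarrow> g m \<le> g n" and half: "\<And>n. g n \<le> 2 * g (Suc n)"
    and c0: "c \<le> g 0" and cb: "\<And>j. c * (1/2) ^ h j \<le> g (a (Suc j))" and cpos: "c > 0"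
  shows "c * (1/2) ^ Fc (blockfr a h) l \<le> g l"
proof (induction l)
  case 0 then show ?case using c0 by (simp add: Fc_def)
next
  case (Suc l)
  show ?case
  proof (cases "blockfr a h l")
    case True
    then have "c * (1/2) ^ Fc (blockfr a h) (Suc l) = (c * (1/2) ^ Fc (blockfr a h) l) / 2"
      by (simp add: Fc_Suc)
    also have "\<dots> \<le> g l / 2" using Suc.IH by simp
    also have "\<dots> \<le> g (Suc l)" using half[of l] by simp
    finally show ?thesis .
  next
    case False
    obtain j where j: "a j \<le> l" "l < a (Suc j)" using block_exists by blast
    have l: "a j + h j \<le> l" using False fr_block[OF j] by simp
    have "h j \<le> Fc (blockfr a h) (Suc l)" using l by (intro Fc_h) simp
    then have "c * (1/2) ^ Fc (blockfr a h) (Suc l) \<le> c * (1/2) ^ h j"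
      using cpos by (intro mult_left_mono power_decreasing) auto
    also have "\<dots> \<le> g (a (Suc j))" by (rule cb)
    also have "\<dots> \<le> g (Suc l)" using j(2) by (intro anti) simp
    finally show ?thesis .
  qed
qed

lemma restr_split:
  assumes "x \<in> EE (blockfr a h)"
  shows "restr x (a (Suc j)) = restr x (a j + h j) @ replicate (a (Suc j) - (a j + h j)) False"
proof -
  have z: "\<not> x i" if "a j + h j \<le> i" "i < a (Suc j)" for i
  proof -
    have "a j \<le> i" using that by simp
    then have "\<not> blockfr a h i" using fr_block[of j i] that by simp
    then show ?thesis using assms by (simp add: EE_def)
  qed
  have "[0..<a (Suc j)] = [0..<a j + h j] @ [a j + h j..<a (Suc j)]"
    using ah[of j] by (metis le0 upt_add_eq_append add_diff_inverse_nat not_le)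
  moreover have "map x [a j + h j..<a (Suc j)] = replicate (a (Suc j) - (a j + h j)) False"
    using z by (intro replicate_eqI) auto
  ultimately show ?thesis by (simp add: restr_def)
qed

end

definition clog :: "nat \<Rightarrow> nat" where "clog n = (LEAST c. n < 2 ^ c)"

lemma clog_gt: "n < 2 ^ clog n"
  unfolding clog_def by (rule LeastI[of _ n]) simp

lemma clog_big: assumes "2 ^ T \<le> n" shows "T < clog n"
proof -
  have "(2::nat) ^ T < 2 ^ clog n" using assms clog_gt[of n] by linarith
  then show ?thesis by (subst (asm) power_strict_increasing_iff) simp_all
qed

lemma clog_low: assumes "1 \<le> n" shows "2 ^ (clog n - 1) \<le> n"
proof -
  have "clog n \<noteq> 0" using clog_gt[of n] assms by (cases "clog n") auto
  then have "clog n - 1 < clog n" by simp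
  then have "\<not> n < 2 ^ (clog n - 1)" unfolding clog_def by (rule not_less_Least)
  then show ?thesis by simp
qed

lemma pow_sq: "4 \<le> d \<Longrightarrow> d * d \<le> (2::nat) ^ d"
proof (induction d rule: dec_induct)
  case base then show ?case by simp
next
  case (step d)
  have "4 * d \<le> d * d" using mult_le_mono1[OF step(1)] .
  then have "2 * d + 1 \<le> d * d" using step(1) by linarith
  then show ?case using step(3) by simp
qed

lemma clog_ev:
  fixes \<epsilon> :: real and B :: real assumes "\<epsilon> > 0" "B \<ge> 0"
  shows "\<exists>N. \<forall>n\<ge>N. B + 3 * real (clog n) \<le> \<epsilon> * real n"
proof -
  define T where "T = nat \<lceil>(B + 6) / \<epsilon>\<rceil> + 4"
  have T: "(B + 6) / \<epsilon> \<le> real T" "4 \<le> T" unfolding T_def by linarith+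
  have "B + 3 * real (clog n) \<le> \<epsilon> * real n" if n: "2 ^ T \<le> n" for n
  proof -
    define d where "d = clog n - 1"
    have "T < clog n" using clog_big[OF n] .
    then have d: "T \<le> d" "clog n = Suc d" unfolding d_def by auto
    have "1 \<le> (2::nat) ^ T" by simp
    then have "1 \<le> n" using n by linarith
    then have "2 ^ d \<le> n" using clog_low[of n] d(2) by simp
    moreover have "d * d \<le> 2 ^ d" using d(1) T(2) by (intro pow_sq) simp
    ultimately have "d * d \<le> n" by linarith
    then have nd: "real d * real d \<le> real n" by (metis of_nat_le_iff of_nat_mult)
    have "B + 6 \<le> \<epsilon> * real T" using T(1) assms(1) by (simp add: field_simps)
    also have "\<dots> \<le> \<epsilon> * real d" using d(1) assms(1) by simp
    finally have "(B + 6) * real d \<le> \<epsilon> * real d * real d" by (intro mult_right_mono) auto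
    also have "\<dots> \<le> \<epsilon> * real n" using nd assms(1) by (simp add: mult.assoc)
    finally have h: "(B + 6) * real d \<le> \<epsilon> * real n" .
    have d1: "1 \<le> real d" using d(1) T(2) by simp
    have "B \<le> B * real d" using mult_left_mono[OF d1 assms(2)] by simp
    then have "B + 3 * real (clog n) \<le> (B + 6) * real d"
      using d(2) d1 by (simp add: algebra_simps)
    then show ?thesis using h by linarith
  qed
  then show ?thesis by blast
qed

lemma bad_scales:
  fixes f :: "real \<Rightarrow> real"
  assumes mono: "mono_on {0<..} f" and r: "0 < r" and nle: "\<not> le_star f (\<lambda>x. x powr r)"
  shows "\<exists>n\<ge>N. f ((1/2) ^ n) \<ge> 2 powr (- r * (real n + 1))"
proof -
  have "(1/2::real) ^ N > 0" by simp
  then obtain x where x: "0 < x" "x < (1/2) ^ N" "\<not> f x \<le> x powr r"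
    using nle unfolding le_star_def by blast
  obtain k where k: "(1/2::real) ^ k < x" using real_arch_pow_inv[OF x(1), of "1/2"] by auto
  have "(1/2::real) ^ Suc k \<le> (1/2) ^ k" by (intro power_decreasing) auto
  then have ex: "\<exists>k. (1/2::real) ^ Suc k < x" using k by (intro exI[of _ k]) linarith
  define n where "n = (LEAST k. (1/2::real) ^ Suc k < x)"
  have n1: "(1/2::real) ^ Suc n < x" unfolding n_def using ex by (rule LeastI_ex)
  have nN: "N \<le> n"
  proof (rule ccontr)
    assume "\<not> N \<le> n"
    then have "Suc n \<le> N" by simp
    then have "(1/2::real) ^ N \<le> (1/2) ^ Suc n" by (intro power_decreasing) auto
    then show False using n1 x(2) by linarith
  qed
  have xn: "x \<le> (1/2) ^ n"
  proof (cases n)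
    case 0
    have "(1/2::real) ^ N \<le> 1" by (simp add: power_le_one)
    then show ?thesis using x(2) 0 by simp
  next
    case (Suc k)
    then have "k < n" by simp
    then have "\<not> (1/2::real) ^ Suc k < x" unfolding n_def by (rule not_less_Least)
    then show ?thesis using Suc by simp
  qed
  have e: "(1/2::real) ^ Suc n = 2 powr (- real (Suc n))" by (simp only: powr_half)
  have i0: "2 powr (- r * (real n + 1)) = ((1/2::real) ^ Suc n) powr r"
    unfolding e by (simp add: powr_powr algebra_simps)
  have i1: "((1/2::real) ^ Suc n) powr r \<le> x powr r"
    by (rule powr_mono2) (use n1 r in auto)
  have i2: "f x \<le> f ((1/2) ^ n)"
    by (rule mono_onD[OF mono]) (use x(1) xn in auto)
  have i3: "x powr r < f x" using x(3) by simp
  have "2 powr (- r * (real n + 1)) \<le> f ((1/2) ^ n)" using i0 i1 i2 i3 by linarith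
  then show ?thesis using nN by blast
qed

lemma liminf_le_frequently:
  fixes X :: "nat \<Rightarrow> ereal"
  assumes "\<And>N. \<exists>m\<ge>N. X m \<le> C"
  shows "liminf X \<le> C"
proof (rule ccontr)
  assume "\<not> liminf X \<le> C"
  then have "C < liminf X" by simp
  then have "eventually (\<lambda>n. C < X n) sequentially" using le_Liminf_iff[of "liminf X" sequentially X] by auto
  then obtain N where "\<forall>n\<ge>N. C < X n" unfolding eventually_sequentially by blast
  then show False using assms[of N] by (meson not_less)
qed

lemma partB:
  fixes f :: "real \<Rightarrow> real"
  assumes U: "optimal_pf U" and s1: "s < 1" and r: "0 < r" "r < s"
    and mono: "mono_on {0<..} f" and anti: "antimono_on {0<..} (\<lambda>x. f x / x)"
    and pos: "\<And>x. x > 0 \<Longrightarrow> f x > 0"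
    and nle: "\<not> le_star f (\<lambda>x. x powr r)"
  shows "hausdorff f (D_lt U s) \<noteq> 0"
proof -
  obtain cU where cU: "\<And>w m c. length w < 2 ^ c \<Longrightarrow> m < 2 ^ c \<Longrightarrow>
     K U (w @ replicate m False) \<le> Suc (3 * c + length w) + cU"
    using K_bound[OF U] by blast
  define g where "g n = f ((1/2) ^ n)" for n
  define \<epsilon> where "\<epsilon> = (s - r) / 2"
  have \<epsilon>: "\<epsilon> > 0" using r by (simp add: \<epsilon>_def)
  define Q where "Q p n \<longleftrightarrow> p < n \<and> p + nat \<lceil>r * real n\<rceil> \<le> n \<and>
      real (2 + p + cU) + 3 * real (clog n) \<le> \<epsilon> * real n \<and> 2 powr (- r * (real n + 1)) \<le> g n" for p n
  have exQ: "\<exists>n. Q p n" for p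
  proof -
    obtain N1 where N1: "\<And>n. n \<ge> N1 \<Longrightarrow> real (2 + p + cU) + 3 * real (clog n) \<le> \<epsilon> * real n"
      using clog_ev[OF \<epsilon>, of "real (2 + p + cU)"] by auto
    define N2 where "N2 = nat \<lceil>(real p + 1) / (1 - r)\<rceil> + p + 1"
    obtain n where n: "n \<ge> max N1 N2" "2 powr (- r * (real n + 1)) \<le> g n"
      using bad_scales[OF mono r(1) nle, of "max N1 N2"] unfolding g_def by blast
    have "p < n" using n(1) by (simp add: N2_def)
    moreover have "p + nat \<lceil>r * real n\<rceil> \<le> n"
    proof -
      have r1: "0 < 1 - r" using r s1 by simp
      have "(real p + 1) / (1 - r) \<le> real N2" unfolding N2_def by linarith
      also have "\<dots> \<le> real n" using n(1) by simp
      finally have "real p + 1 \<le> (1 - r) * real n" using r1 by (simp add: field_simps)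
      moreover have "real_of_int \<lceil>r * real n\<rceil> \<le> r * real n + 1" by linarith
      moreover have "0 \<le> r * real n" using r by simp
      ultimately have "real p + real (nat \<lceil>r * real n\<rceil>) \<le> real n" by (simp add: algebra_simps)
      then show ?thesis by linarith
    qed
    moreover have "real (2 + p + cU) + 3 * real (clog n) \<le> \<epsilon> * real n" using N1 n(1) by simp
    ultimately show ?thesis using n(2) unfolding Q_def by blast
  qed
  define a where "a = rec_nat 0 (\<lambda>j p. SOME n. Q p n)"
  have a0: "a 0 = 0" by (simp add: a_def)
  have aS: "a (Suc j) = (SOME n. Q (a j) n)" for j by (simp add: a_def)
  have Qa: "Q (a j) (a (Suc j))" for j unfolding aS by (rule someI_ex) (rule exQ)
  define h where "h j = nat \<lceil>r * real (a (Suc j))\<rceil>" for j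
  interpret B: blocks a h
  proof
    show "a 0 = 0" by (rule a0)
    show "a j + h j \<le> a (Suc j)" for j using Qa[of j] by (simp add: Q_def h_def)
    show "a j < a (Suc j)" for j using Qa[of j] by (simp add: Q_def)
  qed
  define c where "c = min (g 0) (2 powr (- r))"
  have g0: "g 0 > 0" using pos by (simp add: g_def)
  have cpos: "c > 0" using g0 by (simp add: c_def)
  have ganti: "g m \<le> g n" if "n \<le> m" for n m
    unfolding g_def by (rule mono_onD[OF mono]) (use that in \<open>auto intro: power_decreasing\<close>)
  have ghalf: "g n \<le> 2 * g (Suc n)" for n
  proof -
    have "f ((1/2) ^ n) / (1/2) ^ n \<le> f ((1/2) ^ Suc n) / (1/2) ^ Suc n"
      using monotone_onD[OF anti, of "(1/2) ^ Suc n" "(1/2) ^ n"] by (auto intro: power_decreasing)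
    then show ?thesis unfolding g_def by (simp add: field_simps)
  qed
  have cb: "c * (1/2) ^ h j \<le> g (a (Suc j))" for j
  proof -
    let ?A = "a (Suc j)"
    have hA: "r * real ?A \<le> real (h j)" unfolding h_def by linarith
    have "(1/2::real) ^ h j = 2 powr (- real (h j))" by (simp only: powr_half)
    also have "\<dots> \<le> 2 powr (- r * real ?A)" using hA by simp
    finally have 1: "(1/2::real) ^ h j \<le> 2 powr (- r * real ?A)" .
    have "c * (1/2) ^ h j \<le> 2 powr (- r) * 2 powr (- r * real ?A)"
      using 1 cpos by (intro mult_mono) (auto simp: c_def)
    also have "\<dots> = 2 powr (- r * (real ?A + 1))" by (simp add: powr_add[symmetric] algebra_simps)
    also have "\<dots> \<le> g ?A" using Qa[of j] by (simp add: Q_def)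
    finally show ?thesis .
  qed
  have gb: "c * (1/2) ^ Fc (blockfr a h) l \<le> f (2 powr (- real l))" for l
    using B.mass_bound[of g c l, OF ganti ghalf _ cb cpos] by (simp add: c_def g_def powr_half)
  have sub: "EE (blockfr a h) \<subseteq> D_lt U s"
  proof
    fix x assume x: "x \<in> EE (blockfr a h)"
    define r' where "r' = r + \<epsilon>"
    have r's: "r' < s" using r unfolding r'_def \<epsilon>_def by (simp add: field_simps)
    have "\<exists>m\<ge>N. ereal (real (K U (restr x m)) / real m) \<le> ereal r'" for N
    proof (intro exI[of _ "a (Suc N)"] conjI)
      let ?m = "a (Suc N)"
      show "N \<le> ?m" using B.a_ge[of "Suc N"] by simp
      have mpos: "0 < ?m" using B.alt[of N] by simp
      let ?w = "restr x (a N + h N)"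
      have lw: "length ?w = a N + h N" by (simp add: restr_def)
      have l1: "length ?w < 2 ^ clog ?m" using lw B.ah[of N] clog_gt[of ?m] by linarith
      have l2: "?m - (a N + h N) < 2 ^ clog ?m" using clog_gt[of ?m] by linarith
      have "K U (restr x ?m) \<le> Suc (3 * clog ?m + length ?w) + cU"
        unfolding B.restr_split[OF x, of N] by (rule cU[OF l1 l2])
      then have k1: "real (K U (restr x ?m)) \<le> 1 + 3 * real (clog ?m) + real (a N) + real (h N) + real cU"
        using lw by linarith
      have rm: "0 \<le> r * real ?m" using r by simp
      then have "real (nat \<lceil>r * real ?m\<rceil>) = real_of_int \<lceil>r * real ?m\<rceil>" by simp
      moreover have "real_of_int \<lceil>r * real ?m\<rceil> \<le> r * real ?m + 1" by linarith
      ultimately have hN: "real (h N) \<le> r * real ?m + 1" unfolding h_def by linarith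
      have q: "real (2 + a N + cU) + 3 * real (clog ?m) \<le> \<epsilon> * real ?m" using Qa[of N] by (simp add: Q_def)
      have "real (K U (restr x ?m)) \<le> r' * real ?m" using k1 hN q by (simp add: r'_def algebra_simps)
      then show "ereal (real (K U (restr x ?m)) / real ?m) \<le> ereal r'"
        using mpos by (simp add: divide_le_eq)
    qed
    then have "dim U x \<le> ereal r'" unfolding dim_def by (rule liminf_le_frequently)
    also have "\<dots> < ereal s" using r's by simp
    finally show "x \<in> D_lt U s" by (simp add: D_lt_def)
  qed
  have "ennreal c \<le> hausdorff f (D_lt U s)"
    by (rule H_lower[OF gb cpos _ sub]) (simp add: pos less_imp_le)
  moreover have "ennreal c > 0" using cpos by simp
  ultimately show ?thesis by auto
qed

lemma le_star_powr: "r \<le> t \<Longrightarrow> le_star (\<lambda>x. x powr t) (\<lambda>x. x powr r)"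
  unfolding le_star_def by (intro exI[of _ 1]) (auto intro: powr_mono')

lemma not_le_star_powr:
  assumes "t < r" shows "\<not> le_star (\<lambda>x::real. x powr t) (\<lambda>x. x powr r)"
proof
  assume "le_star (\<lambda>x. x powr t) (\<lambda>x. x powr r)"
  then obtain \<delta> where \<delta>: "\<delta> > 0" "\<And>x. 0 < x \<Longrightarrow> x < \<delta> \<Longrightarrow> x powr t \<le> x powr r"
    unfolding le_star_def by blast
  define x where "x = min (\<delta> / 2) (1 / 2)"
  have x: "0 < x" "x < \<delta>" "x < 1" using \<delta>(1) by (auto simp: x_def)
  have "x powr r < x powr t" using powr_less_mono'[OF x(1) x(3) assms] .
  then show False using \<delta>(2)[OF x(1,2)] by simp
qed

lemma powr_props:
  fixes t :: real assumes "0 \<le> t" "t \<le> 1"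
  shows "mono_on {0<..} (\<lambda>x::real. x powr t)" "antimono_on {0<..} (\<lambda>x::real. x powr t / x)"
    "\<And>x::real. x > 0 \<Longrightarrow> x powr t > 0"
proof -
  show "mono_on {0<..} (\<lambda>x::real. x powr t)"
    by (rule mono_onI) (use assms in \<open>auto intro: powr_mono2\<close>)
  have e: "x powr t / x = x powr (t - 1)" if "x > 0" for x :: real
    using that by (simp add: powr_diff)
  show "antimono_on {0<..} (\<lambda>x::real. x powr t / x)"
    unfolding monotone_on_def
  proof (intro ballI impI)
    fix x y :: real assume "x \<in> {0<..}" "y \<in> {0<..}" "x \<le> y"
    then show "y powr t / y \<le> x powr t / x" using e powr_mono2'[of "t - 1" x y] assms by simp
  qed
  show "\<And>x::real. x > 0 \<Longrightarrow> x powr t > 0" by simp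
qed

theorem mainTheorem5:
  fixes s :: real and U :: recf
  assumes "0 < s" and "s < 1" and "optimal_pf U"
  shows "(\<forall>f. gauge f \<and> antimono_on {0<..} (\<lambda>x. f x / x) \<longrightarrow>
            (hausdorff f (D_lt U s) = 0 \<longleftrightarrow>
             (\<forall>r. 0 < r \<and> r < s \<longrightarrow> le_star f (\<lambda>x. x powr r))))
         \<and> hdim (D_lt U s) = s
         \<and> hausdorff (\<lambda>x. x powr s) (D_lt U s) = 0"
proof (intro conjI allI impI)
  fix f :: "real \<Rightarrow> real" assume fa: "gauge f \<and> antimono_on {0<..} (\<lambda>x. f x / x)"
  show "hausdorff f (D_lt U s) = 0 \<longleftrightarrow> (\<forall>r. 0 < r \<and> r < s \<longrightarrow> le_star f (\<lambda>x. x powr r))"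
  proof
    assume H: "hausdorff f (D_lt U s) = 0"
    show "\<forall>r. 0 < r \<and> r < s \<longrightarrow> le_star f (\<lambda>x. x powr r)"
    proof (intro allI impI, rule ccontr)
      fix r assume r: "0 < r \<and> r < s" and nle: "\<not> le_star f (\<lambda>x. x powr r)"
      have "hausdorff f (D_lt U s) \<noteq> 0"
        using partB[OF assms(3) assms(2) _ _ _ _ _ nle] r fa unfolding gauge_def by blast
      then show False using H by simp
    qed
  next
    assume "\<forall>r. 0 < r \<and> r < s \<longrightarrow> le_star f (\<lambda>x. x powr r)"
    then show "hausdorff f (D_lt U s) = 0" by (rule partA[OF assms(3) assms(1)])
  qed
next
  have Z: "hausdorff (\<lambda>x. x powr t) (D_lt U s) = 0 \<longleftrightarrow> s \<le> t" if t: "0 \<le> t" for t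
  proof
    assume H: "hausdorff (\<lambda>x. x powr t) (D_lt U s) = 0"
    show "s \<le> t"
    proof (rule ccontr)
      assume "\<not> s \<le> t"
      then have ts: "t < s" by simp
      define r where "r = (t + s) / 2"
      have r: "0 < r" "r < s" "t < r" using ts t by (auto simp: r_def field_simps)
      note pp = powr_props[of t]
      have "hausdorff (\<lambda>x. x powr t) (D_lt U s) \<noteq> 0"
        using partB[OF assms(3) assms(2) r(1,2), of "\<lambda>x. x powr t"] pp t ts assms(2)
          not_le_star_powr[OF r(3)] by simp
      then show False using H by simp
    qed
  next
    assume "s \<le> t"
    then show "hausdorff (\<lambda>x. x powr t) (D_lt U s) = 0"
      using partA[OF assms(3) assms(1)] le_star_powr by simp
  qed
  have "{t. t \<ge> 0 \<and> hausdorff (\<lambda>x. x powr t) (D_lt U s) = 0} = {s..}"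
    using Z assms(1) by auto
  then show "hdim (D_lt U s) = s" unfolding hdim_def by simp
next
  show "hausdorff (\<lambda>x. x powr s) (D_lt U s) = 0"
    using partA[OF assms(3) assms(1)] le_star_powr by simp
qed

end
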